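(* Let $G$ be a finite subgroup of $\mathrm{U}(q)$ and let $\boldsymbol{\lambda}$ be an irreducible representation of $G$ of dimension $|\boldsymbol{\lambda}|$. Suppose $G$ is a $\boldsymbol{\lambda}$-twisted unitary $t$-group. Let $n\ge 1$ and let $\mathcal{C}\subseteq(\mathbb{C}^q)^{\otimes n}$ be any subspace that transforms in $\boldsymbol{\lambda}$ under the action $g\mapsto g^{\otimes n}$ of $G$. Then $\mathcal{C}$ is a $|\boldsymbol{\lambda}|$-dimensional quantum code of distance $d\ge t+1$, i.e. for every operator $E$ on $(\mathbb{C}^q)^{\otimes n}$ of weight at most $t$ there exists $c_E\in\mathbb{C}$ with $\langle\psi|E|\phi\rangle=c_E\langle\psi|\phi\rangle$ for all $|\psi\rangle,|\phi\rangle\in\mathcal{C}$. Moreover, its transversal gate group contains $\boldsymbol{\lambda}(G)$: for every $g\in G$, the transversal operator $g^{\otimes n}$ preserves $\mathcal{C}$ and acts on it as the logical gate $\boldsymbol{\lambda}(g)$ (that is, there is a fixed linear isomorphism $T$ from the representation space of $\boldsymbol{\lambda}$ onto $\mathcal{C}$ with $g^{\otimes n}T = T\boldsymbol{\lambda}(g)$ for all $g\in G$).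
   Context: Definition: $G\subseteq \mathrm{U}(q)$ finite is a $\boldsymbol{\lambda}$-twisted unitary $t$-group, where $\boldsymbol{\lambda}$ is an irreducible representation of $G$ with character $\lambda$, if $\frac{1}{|G|}\sum_{g\in G}|\lambda(g)|^2 \,(g\otimes \bar g)^{\otimes t} = \int_{\mathrm{U}(q)} (U\otimes \bar U)^{\otimes t}\,dU$, where $\bar g$ is the entrywise complex conjugate and the integral is with respect to normalized Haar measure. A subspace $\mathcal{C}$ transforms in $\boldsymbol{\lambda}$ if it is invariant under all $g^{\otimes n}$, $g\in G$, and the resulting representation of $G$ on $\mathcal{C}$ is isomorphic to $\boldsymbol{\lambda}$. An operator on $(\mathbb{C}^q)^{\otimes n}$ has weight at most $t$ if it is a linear combination of operators each acting as the identity on all but at most $t$ of the $n$ tensor factors. *)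

theory Defs
  imports "HOL-Probability.Probability"
begin

text \<open>Matrices in U(q) are represented as elements of complex^'q^'q, with the
  dimension q = CARD('q) given by a finite type.\<close>

type_synonym 'q cmat = "complex^'q^'q"

definition cadj :: "complex^'n^'m \<Rightarrow> complex^'m^'n" where
  "cadj A = (\<chi> i j. cnj (A $ j $ i))"

definition unitary_group :: "('q::finite) cmat set" where
  "unitary_group = {U. U ** cadj U = mat 1 \<and> cadj U ** U = mat 1}"

definition finite_unitary_subgroup :: "('q::finite) cmat set \<Rightarrow> bool" where
  "finite_unitary_subgroup G \<longleftrightarrow> finite G \<and> G \<subseteq> unitary_group \<and> mat 1 \<in> G
     \<and> (\<forall>g\<in>G. \<forall>h\<in>G. g ** h \<in> G) \<and> (\<forall>g\<in>G. cadj g \<in> G)"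

text \<open>Complex subspaces (HOL-Analysis' subspace is real).\<close>

definition csubspace_vec :: "(complex^'d) set \<Rightarrow> bool" where
  "csubspace_vec W \<longleftrightarrow> 0 \<in> W \<and> (\<forall>u\<in>W. \<forall>v\<in>W. u + v \<in> W) \<and> (\<forall>c. \<forall>v\<in>W. c *s v \<in> W)"

definition representation :: "('q::finite) cmat set \<Rightarrow> ('q cmat \<Rightarrow> complex^'d^'d) \<Rightarrow> bool" where
  "representation G \<rho> \<longleftrightarrow> (\<forall>g\<in>G. \<forall>h\<in>G. \<rho> (g ** h) = \<rho> g ** \<rho> h) \<and> \<rho> (mat 1) = mat 1"

definition irreducible_rep :: "('q::finite) cmat set \<Rightarrow> ('q cmat \<Rightarrow> complex^'d::finite^'d) \<Rightarrow> bool" where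
  "irreducible_rep G \<rho> \<longleftrightarrow> representation G \<rho> \<and>
     (\<forall>W. csubspace_vec W \<and> (\<forall>g\<in>G. \<forall>w\<in>W. \<rho> g *v w \<in> W) \<longrightarrow> W = {0} \<or> W = UNIV)"

definition character :: "('q cmat \<Rightarrow> complex^'d::finite^'d) \<Rightarrow> 'q cmat \<Rightarrow> complex" where
  "character \<rho> g = trace (\<rho> g)"

definition haar_measure :: "('q::finite) cmat measure \<Rightarrow> bool" where
  "haar_measure \<mu> \<longleftrightarrow> prob_space \<mu> \<and> sets \<mu> = sets borel \<and> emeasure \<mu> unitary_group = 1 \<and>
     (\<forall>V\<in>unitary_group. distr \<mu> borel (\<lambda>U. V ** U) = \<mu> \<and> distr \<mu> borel (\<lambda>U. U ** V) = \<mu>)"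

text \<open>Entry (a,b) of (U \<otimes> conj U)^{\<otimes> t}; row/column indices of U \<otimes> conj U are pairs.\<close>

definition moment_entry :: "nat \<Rightarrow> ('q::finite) cmat \<Rightarrow> ('q \<times> 'q) list \<Rightarrow> ('q \<times> 'q) list \<Rightarrow> complex" where
  "moment_entry t U a b = (\<Prod>k<t. U $ fst (a!k) $ fst (b!k) * cnj (U $ snd (a!k) $ snd (b!k)))"

definition twisted_unitary_t_group ::
  "('q::finite) cmat set \<Rightarrow> ('q cmat \<Rightarrow> complex^'d::finite^'d) \<Rightarrow> nat \<Rightarrow> bool" where
  "twisted_unitary_t_group G \<rho> t \<longleftrightarrow>
     (\<exists>\<mu>. haar_measure \<mu> \<and>
       (\<forall>a b. length a = t \<longrightarrow> length b = t \<longrightarrow>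
          (1 / of_nat (card G)) * (\<Sum>g\<in>G. complex_of_real ((cmod (character \<rho> g))\<^sup>2) * moment_entry t g a b)
          = integral\<^sup>L \<mu> (\<lambda>U. moment_entry t U a b)))"

text \<open>(C^q)^{\<otimes> n}: functions on index tuples (lists of length n), vanishing elsewhere.
  Operators are kernels on index tuples.\<close>

definition tuples :: "nat \<Rightarrow> ('q::finite) list set" where
  "tuples n = {xs. length xs = n}"

definition tensor_space :: "nat \<Rightarrow> (('q::finite) list \<Rightarrow> complex) set" where
  "tensor_space n = {v. \<forall>xs. length xs \<noteq> n \<longrightarrow> v xs = 0}"

definition apply_op :: "nat \<Rightarrow> (('q::finite) list \<Rightarrow> 'q list \<Rightarrow> complex) \<Rightarrow> ('q list \<Rightarrow> complex) \<Rightarrow> ('q list \<Rightarrow> complex)" where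
  "apply_op n E v = (\<lambda>xs. if length xs = n then (\<Sum>ys\<in>tuples n. E xs ys * v ys) else 0)"

definition inner_n :: "nat \<Rightarrow> (('q::finite) list \<Rightarrow> complex) \<Rightarrow> ('q list \<Rightarrow> complex) \<Rightarrow> complex" where
  "inner_n n \<psi> \<phi> = (\<Sum>xs\<in>tuples n. cnj (\<psi> xs) * \<phi> xs)"

definition tensor_pow :: "nat \<Rightarrow> ('q::finite) cmat \<Rightarrow> 'q list \<Rightarrow> 'q list \<Rightarrow> complex" where
  "tensor_pow n g xs ys = (\<Prod>k<n. g $ (xs!k) $ (ys!k))"

definition csubspace_fun :: "('a \<Rightarrow> complex) set \<Rightarrow> bool" where
  "csubspace_fun W \<longleftrightarrow> (\<lambda>_. 0) \<in> W \<and> (\<forall>u\<in>W. \<forall>v\<in>W. (\<lambda>x. u x + v x) \<in> W)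
     \<and> (\<forall>c. \<forall>v\<in>W. (\<lambda>x. c * v x) \<in> W)"

text \<open>An operator acting as the identity on all tensor factors outside S
  (i.e. of the form A_S \<otimes> I), with card S \<le> t.\<close>

definition local_op :: "nat \<Rightarrow> nat \<Rightarrow> (('q::finite) list \<Rightarrow> 'q list \<Rightarrow> complex) \<Rightarrow> bool" where
  "local_op n t E \<longleftrightarrow> (\<exists>S A. S \<subseteq> {..<n} \<and> card S \<le> t \<and>
     (\<forall>xs\<in>tuples n. \<forall>ys\<in>tuples n.
        E xs ys = (if (\<forall>k\<in>{..<n} - S. xs!k = ys!k)
                   then A (map (\<lambda>k. xs!k) (sorted_list_of_set S)) (map (\<lambda>k. ys!k) (sorted_list_of_set S))
                   else 0)))"

definition weight_le :: "nat \<Rightarrow> nat \<Rightarrow> (('q::finite) list \<Rightarrow> 'q list \<Rightarrow> complex) \<Rightarrow> bool" where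
  "weight_le n t E \<longleftrightarrow> (\<exists>m (Es :: nat \<Rightarrow> 'q list \<Rightarrow> 'q list \<Rightarrow> complex). (\<forall>i<m. local_op n t (Es i)) \<and>
     (\<forall>xs\<in>tuples n. \<forall>ys\<in>tuples n. E xs ys = (\<Sum>i<m. Es i xs ys)))"

definition intertwining_iso ::
  "nat \<Rightarrow> ('q::finite) cmat set \<Rightarrow> ('q cmat \<Rightarrow> complex^'d::finite^'d) \<Rightarrow> ('q list \<Rightarrow> complex) set
     \<Rightarrow> (complex^'d \<Rightarrow> ('q list \<Rightarrow> complex)) \<Rightarrow> bool" where
  "intertwining_iso n G \<rho> C T \<longleftrightarrow>
     (\<forall>u v. T (u + v) = (\<lambda>x. T u x + T v x)) \<and> (\<forall>c v. T (c *s v) = (\<lambda>x. c * T v x)) \<and>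
     bij_betw T UNIV C \<and>
     (\<forall>g\<in>G. \<forall>v. apply_op n (tensor_pow n g) (T v) = T (\<rho> g *v v))"

definition transforms_in ::
  "nat \<Rightarrow> ('q::finite) cmat set \<Rightarrow> ('q cmat \<Rightarrow> complex^'d::finite^'d) \<Rightarrow> ('q list \<Rightarrow> complex) set \<Rightarrow> bool" where
  "transforms_in n G \<rho> C \<longleftrightarrow> csubspace_fun C \<and> C \<subseteq> tensor_space n \<and>
     (\<forall>g\<in>G. \<forall>v\<in>C. apply_op n (tensor_pow n g) v \<in> C) \<and>
     (\<exists>T. intertwining_iso n G \<rho> C T)"

end

theory Submission
  imports Defs "Jordan_Normal_Form.Char_Poly"
begin


lemma complex_eigen_exists:
  fixes M :: "complex^'d::finite^'d"
  shows "\<exists>k v. v \<noteq> 0 \<and> M *v v = k *s v"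
proof -
  define n where "n = CARD('d)"
  have n0: "n > 0" unfolding n_def by simp
  obtain e :: "nat \<Rightarrow> 'd" where e: "bij_betw e {0..<n} UNIV"
    using ex_bij_betw_nat_finite[of "UNIV :: 'd set"] unfolding n_def by auto
  define A where "A = Matrix.mat n n (\<lambda>(i,j). M $ e i $ e j)"
  have A: "A \<in> carrier_mat n n" unfolding A_def by simp
  obtain as where as: "char_poly A = (\<Prod>a\<leftarrow>as. [:- a, 1:])" "length as = n"
    using char_poly_factorized[OF A] by blast
  define k where "k = as ! 0"
  have "k \<in> set as" unfolding k_def using as(2) n0 by simp
  hence "poly (char_poly A) k = 0" unfolding as(1)
    by (induction as) (auto simp: poly_prod_list)
  hence "eigenvalue A k" using eigenvalue_root_char_poly[OF A] by simp
  then obtain v where v: "v \<in> carrier_vec n" "v \<noteq> 0\<^sub>v n" "A *\<^sub>v v = k \<cdot>\<^sub>v v"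
    unfolding eigenvalue_def eigenvector_def using A by auto
  define ei where "ei = inv_into {0..<n} e"
  have eei: "e (ei j) = j" for j unfolding ei_def using e by (simp add: bij_betw_inv_into_right)
  have eie: "i < n \<Longrightarrow> ei (e i) = i" for i unfolding ei_def using e
    by (simp add: bij_betw_inv_into_left)
  have ein: "ei j < n" for j unfolding ei_def using e
    by (metis atLeastLessThan_iff bij_betw_def inv_into_into UNIV_I)
  define w where "w = (\<chi> j. v $ ei j)"
  have "w \<noteq> 0"
  proof
    assume "w = 0"
    hence "v $ i = 0" if "i < n" for i
      using that eie[OF that] unfolding w_def by (metis vec_lambda_beta zero_index)
    hence "v = 0\<^sub>v n" using v(1) by auto
    thus False using v(2) by simp
  qed
  moreover have "M *v w = k *s w"
  unfolding Finite_Cartesian_Product.vec_eq_iff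
  proof (rule allI)
    fix j
    have "(M *v w) $ j = (\<Sum>l\<in>UNIV. M $ j $ l * v $ ei l)"
      unfolding w_def matrix_vector_mult_def by simp
    also have "\<dots> = (\<Sum>l\<in>{0..<n}. M $ j $ e l * v $ l)"
      by (rule sum.reindex_bij_betw[OF e, symmetric, THEN trans]) (simp add: eie)
    also have "\<dots> = (A *\<^sub>v v) $ ei j"
      using ein[of j] v(1) unfolding A_def
      by (auto simp: scalar_prod_def eei intro!: sum.cong)
    also have "\<dots> = k * v $ ei j" using v(3) ein[of j] v(1) by simp
    finally show "(M *v w) $ j = (k *s w) $ j" unfolding w_def by simp
  qed
  ultimately show ?thesis by blast
qed

no_notation Matrix.vec_index (infixl "$" 100)



lemma finite_tuples[simp]: "finite (tuples n :: ('a::finite) list set)"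
proof -
  have "tuples n = {xs::'a list. set xs \<subseteq> UNIV \<and> length xs = n}" unfolding tuples_def by auto
  thus ?thesis using finite_lists_length_eq[of "UNIV::'a set" n] by simp
qed

lemma tuples_Suc: "tuples (Suc n) = (\<lambda>(x,xs). x # xs) ` (UNIV \<times> (tuples n :: ('a::finite) list set))"
  unfolding tuples_def by (auto simp: image_iff length_Suc_conv)

lemma inj_cons_pair: "inj_on (\<lambda>(x,xs). x # xs) A" by (auto simp: inj_on_def)

lemma sum_tuples_Suc:
  "(\<Sum>xs\<in>tuples (Suc n). g xs) = (\<Sum>x\<in>UNIV. \<Sum>xs\<in>(tuples n :: ('a::finite) list set). g (x # xs))"
proof -
  have "(\<Sum>xs\<in>tuples (Suc n). g xs) = (\<Sum>p\<in>UNIV \<times> (tuples n :: 'a list set). g ((\<lambda>(x,xs). x # xs) p))"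
    unfolding tuples_Suc by (rule sum.reindex[OF inj_cons_pair, unfolded comp_def])
  also have "\<dots> = (\<Sum>p\<in>UNIV \<times> (tuples n :: 'a list set). g (fst p # snd p))"
    by (simp add: split_beta)
  also have "\<dots> = (\<Sum>x\<in>UNIV. \<Sum>xs\<in>(tuples n :: 'a list set). g (x # xs))"
    unfolding sum.cartesian_product case_prod_unfold by simp
  finally show ?thesis .
qed

lemma sum_tuples_prod:
  fixes f :: "nat \<Rightarrow> 'a::finite \<Rightarrow> 'b::comm_semiring_1"
  shows "(\<Sum>xs\<in>tuples n. \<Prod>k<n. f k (xs!k)) = (\<Prod>k<n. \<Sum>x\<in>UNIV. f k x)"
proof (induction n arbitrary: f)
  case 0
  have "tuples 0 = {[]::'a list}" unfolding tuples_def by auto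
  thus ?case by simp
next
  case (Suc n)
  have "(\<Sum>xs\<in>tuples (Suc n). \<Prod>k<Suc n. f k (xs!k))
      = (\<Sum>x\<in>UNIV. \<Sum>xs\<in>tuples n. f 0 x * (\<Prod>k<n. f (Suc k) (xs ! k)))"
    by (simp only: sum_tuples_Suc prod.lessThan_Suc_shift nth_Cons_0 nth_Cons_Suc)
  also have "\<dots> = (\<Sum>x\<in>UNIV. f 0 x) * (\<Sum>xs\<in>tuples n. (\<Prod>k<n. f (Suc k) (xs ! k)))"
    by (rule sum_product[symmetric])
  also have "\<dots> = (\<Sum>x\<in>UNIV. f 0 x) * (\<Prod>k<n. \<Sum>x\<in>UNIV. f (Suc k) x)"
    using Suc.IH[of "\<lambda>k. f (Suc k)"] by simp
  also have "\<dots> = (\<Prod>k<Suc n. \<Sum>x\<in>UNIV. f k x)" by (simp only: prod.lessThan_Suc_shift)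
  finally show ?case .
qed

lemma sum_tuples2_prod:
  fixes f :: "nat \<Rightarrow> 'a::finite \<Rightarrow> 'a \<Rightarrow> 'b::comm_semiring_1"
  shows "(\<Sum>xs\<in>tuples n. \<Sum>ys\<in>tuples n. \<Prod>k<n. f k (xs!k) (ys!k))
       = (\<Prod>k<n. \<Sum>x\<in>UNIV. \<Sum>y\<in>UNIV. f k x y)"
proof (induction n arbitrary: f)
  case 0
  have "tuples 0 = {[]::'a list}" unfolding tuples_def by auto
  thus ?case by simp
next
  case (Suc n)
  have "(\<Sum>xs\<in>tuples (Suc n). \<Sum>ys\<in>tuples (Suc n). \<Prod>k<Suc n. f k (xs!k) (ys!k))
    = (\<Sum>x\<in>UNIV. \<Sum>xs\<in>tuples n. \<Sum>y\<in>UNIV. \<Sum>ys\<in>tuples n.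
         f 0 x y * (\<Prod>k<n. f (Suc k) (xs!k) (ys!k)))"
    by (simp only: sum_tuples_Suc prod.lessThan_Suc_shift nth_Cons_0 nth_Cons_Suc)
  also have "\<dots> = (\<Sum>x\<in>UNIV. \<Sum>y\<in>UNIV. f 0 x y * (\<Sum>xs\<in>tuples n. \<Sum>ys\<in>tuples n.
         (\<Prod>k<n. f (Suc k) (xs!k) (ys!k))))"
    by (simp add: sum_distrib_left sum.swap[of _ "tuples n" UNIV])
  also have "\<dots> = (\<Sum>x\<in>UNIV. \<Sum>y\<in>UNIV. f 0 x y) * (\<Prod>k<n. \<Sum>x\<in>UNIV. \<Sum>y\<in>UNIV. f (Suc k) x y)"
    using Suc.IH[of "\<lambda>k. f (Suc k)"] by (simp add: sum_distrib_right)
  also have "\<dots> = (\<Prod>k<Suc n. \<Sum>x\<in>UNIV. \<Sum>y\<in>UNIV. f k x y)" by (simp only: prod.lessThan_Suc_shift)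
  finally show ?case .
qed




definition Nker :: "nat \<Rightarrow> (('q::finite) list \<Rightarrow> 'q list \<Rightarrow> complex) \<Rightarrow> 'q cmat \<Rightarrow> 'q list \<Rightarrow> 'q list \<Rightarrow> complex" where
  "Nker n E g ys zs = (\<Sum>xs\<in>tuples n. \<Sum>xs'\<in>tuples n. cnj (tensor_pow n g xs ys) * E xs xs' * tensor_pow n g xs' zs)"

lemma in_tuples[simp]: "xs \<in> tuples n \<longleftrightarrow> length xs = n" unfolding tuples_def by simp

lemma sum4_perm:
  "(\<Sum>a\<in>A. \<Sum>b\<in>A. \<Sum>c\<in>A. \<Sum>d\<in>A. F a b c d) = (\<Sum>d\<in>A. \<Sum>c\<in>A. \<Sum>a\<in>A. \<Sum>b\<in>A. F a b c d)"
proof -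
  have "(\<Sum>a\<in>A. \<Sum>b\<in>A. \<Sum>c\<in>A. \<Sum>d\<in>A. F a b c d) = (\<Sum>a\<in>A. \<Sum>b\<in>A. \<Sum>d\<in>A. \<Sum>c\<in>A. F a b c d)"
    by (intro sum.cong refl sum.swap)
  also have "\<dots> = (\<Sum>a\<in>A. \<Sum>d\<in>A. \<Sum>b\<in>A. \<Sum>c\<in>A. F a b c d)"
    by (intro sum.cong refl sum.swap)
  also have "\<dots> = (\<Sum>d\<in>A. \<Sum>a\<in>A. \<Sum>b\<in>A. \<Sum>c\<in>A. F a b c d)"
    by (rule sum.swap)
  also have "\<dots> = (\<Sum>d\<in>A. \<Sum>a\<in>A. \<Sum>c\<in>A. \<Sum>b\<in>A. F a b c d)"
    by (intro sum.cong refl sum.swap)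
  also have "\<dots> = (\<Sum>d\<in>A. \<Sum>c\<in>A. \<Sum>a\<in>A. \<Sum>b\<in>A. F a b c d)"
    by (intro sum.cong refl sum.swap)
  finally show ?thesis .
qed

lemma inner_twirl:
  "inner_n n (apply_op n (tensor_pow n g) \<psi>) (apply_op n E (apply_op n (tensor_pow n g) \<phi>))
   = (\<Sum>ys\<in>tuples n. \<Sum>zs\<in>tuples n. cnj (\<psi> ys) * \<phi> zs * Nker n E g ys zs)"
proof -
  let ?T = "tuples n"
  have "inner_n n (apply_op n (tensor_pow n g) \<psi>) (apply_op n E (apply_op n (tensor_pow n g) \<phi>))
    = (\<Sum>xs\<in>?T. cnj (\<Sum>ys\<in>?T. tensor_pow n g xs ys * \<psi> ys) *
          (\<Sum>xs'\<in>?T. E xs xs' * (\<Sum>zs\<in>?T. tensor_pow n g xs' zs * \<phi> zs)))"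
    unfolding inner_n_def apply_op_def by (intro sum.cong refl) auto
  also have "\<dots> = (\<Sum>xs\<in>?T. \<Sum>xs'\<in>?T. \<Sum>zs\<in>?T. \<Sum>ys\<in>?T.
        cnj (\<psi> ys) * \<phi> zs * (cnj (tensor_pow n g xs ys) * E xs xs' * tensor_pow n g xs' zs))"
    by (simp add: sum_distrib_left sum_distrib_right mult_ac)
  also have "\<dots> = (\<Sum>ys\<in>?T. \<Sum>zs\<in>?T. \<Sum>xs\<in>?T. \<Sum>xs'\<in>?T.
        cnj (\<psi> ys) * \<phi> zs * (cnj (tensor_pow n g xs ys) * E xs xs' * tensor_pow n g xs' zs))"
    by (rule sum4_perm)
  also have "\<dots> = (\<Sum>ys\<in>?T. \<Sum>zs\<in>?T. cnj (\<psi> ys) * \<phi> zs * Nker n E g ys zs)"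
    unfolding Nker_def by (simp add: sum_distrib_left)
  finally show ?thesis .
qed




lemma prod_of_bool_eq: "finite A \<Longrightarrow> (\<Prod>k\<in>A. (of_bool (P k) :: 'b::comm_semiring_1)) = of_bool (\<forall>k\<in>A. P k)"
  by (induction A rule: finite_induct) auto

lemma sum_of_bool_mult:
  assumes "finite A" "a \<in> A"
  shows "(\<Sum>x\<in>A. of_bool (a = x) * f x) = (f a :: 'b::comm_semiring_1)"
proof -
  have "(\<Sum>x\<in>A. of_bool (a = x) * f x) = (\<Sum>x\<in>A. if a = x then f x else 0)"
    by (intro sum.cong) auto
  thus ?thesis using assms by simp
qed

lemma sum_of_bool_mult':
  assumes "finite A" "a \<in> A"
  shows "(\<Sum>x\<in>A. of_bool (x = a) * f x) = (f a :: 'b::comm_semiring_1)"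
  using sum_of_bool_mult[OF assms, of f] by (simp add: eq_commute)

lemma sum_swap3:
  "(\<Sum>a\<in>A. \<Sum>b\<in>B. \<Sum>c\<in>C. F a b c) = (\<Sum>b\<in>B. \<Sum>c\<in>C. \<Sum>a\<in>A. F a b c)"
  by (subst sum.swap) (intro sum.cong refl sum.swap)

lemma sum_swap22:
  "(\<Sum>a\<in>A. \<Sum>b\<in>B. \<Sum>c\<in>C. \<Sum>d\<in>D. F a b c d) = (\<Sum>c\<in>C. \<Sum>d\<in>D. \<Sum>a\<in>A. \<Sum>b\<in>B. F a b c d)"
proof -
  have "(\<Sum>a\<in>A. \<Sum>b\<in>B. \<Sum>c\<in>C. \<Sum>d\<in>D. F a b c d) = (\<Sum>a\<in>A. \<Sum>c\<in>C. \<Sum>d\<in>D. \<Sum>b\<in>B. F a b c d)"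
    by (intro sum.cong refl sum_swap3)
  also have "\<dots> = (\<Sum>c\<in>C. \<Sum>d\<in>D. \<Sum>a\<in>A. \<Sum>b\<in>B. F a b c d)" by (rule sum_swap3)
  finally show ?thesis .
qed

lemma unitary_col:
  fixes g :: "('q::finite) cmat"
  assumes "cadj g ** g = Finite_Cartesian_Product.mat 1"
  shows "(\<Sum>x\<in>UNIV. cnj (g $ x $ y) * g $ x $ z) = of_bool (y = z)"
proof -
  have "(\<Sum>x\<in>UNIV. cnj (g $ x $ y) * g $ x $ z) = (cadj g ** g) $ y $ z"
    unfolding matrix_matrix_mult_def cadj_def by simp
  also have "\<dots> = of_bool (y = z)" unfolding assms by (simp add: Finite_Cartesian_Product.mat_def)
  finally show ?thesis .
qed

lemma Nker_local:
  fixes g :: "('q::finite) cmat"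
  assumes unit: "cadj g ** g = Finite_Cartesian_Product.mat 1"
    and S: "S \<subseteq> {..<n}"
    and E: "\<forall>xs\<in>tuples n. \<forall>ys\<in>tuples n.
        E xs ys = (if (\<forall>k\<in>{..<n} - S. xs!k = ys!k)
                   then A (map (\<lambda>k. xs!k) (sorted_list_of_set S)) (map (\<lambda>k. ys!k) (sorted_list_of_set S))
                   else 0)"
    and ys: "length ys = n" and zs: "length zs = n"
  shows "Nker n E g ys zs = (\<Prod>k\<in>{..<n}-S. of_bool (ys!k = zs!k)) *
     (\<Sum>u\<in>tuples (card S). \<Sum>v\<in>tuples (card S). A u v *
        moment_entry (card S) g (zip v u)
          (zip (map (\<lambda>k. zs!k) (sorted_list_of_set S)) (map (\<lambda>k. ys!k) (sorted_list_of_set S))))"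
proof -
  define sl where "sl = sorted_list_of_set S"
  define s where "s = card S"
  have finS: "finite S" using S finite_subset by blast
  have lsl: "length sl = s" unfolding sl_def s_def by (simp add: length_sorted_list_of_set)
  have dsl: "distinct sl" unfolding sl_def by (simp add: distinct_sorted_list_of_set)
  have ssl: "set sl = S" unfolding sl_def using finS by (simp add: set_sorted_list_of_set)
  have bij: "bij_betw ((!) sl) {..<s} S" using bij_betw_nth[OF dsl] lsl ssl by simp
  define pos where "pos = inv_into {..<s} ((!) sl)"
  have pos1: "k \<in> S \<Longrightarrow> sl ! (pos k) = k" for k unfolding pos_def using bij
    by (simp add: bij_betw_inv_into_right)
  have pos2: "j < s \<Longrightarrow> pos (sl ! j) = j" for j unfolding pos_def using bij
    by (simp add: bij_betw_inv_into_left)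
  have pos3: "k \<in> S \<Longrightarrow> pos k < s" for k unfolding pos_def using bij
    by (metis bij_betw_def inv_into_into lessThan_iff)
  define F where "F u v k x x' = (if k \<in> S then of_bool (x = u ! pos k) * of_bool (x' = v ! pos k)
      else (of_bool (x = x') :: complex))" for u v :: "'q list" and k x x'
  have finT: "finite {..<n}" by simp
  have split: "(\<Prod>k<n. H k) = (\<Prod>k\<in>S. H k) * (\<Prod>k\<in>{..<n}-S. H k)" for H :: "nat \<Rightarrow> complex"
    using prod.subset_diff[OF S finT] by (simp add: mult.commute)
  have mapeq: "length u = s \<Longrightarrow> (map (\<lambda>k. xs!k) sl = u) = (\<forall>k\<in>S. xs ! k = u ! pos k)" for u xs :: "'q list"
  proof
    assume "map (\<lambda>k. xs!k) sl = u"
    thus "\<forall>k\<in>S. xs ! k = u ! pos k" using pos1 pos3 lsl by auto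
  next
    assume a: "\<forall>k\<in>S. xs ! k = u ! pos k" and lu: "length u = s"
    show "map (\<lambda>k. xs!k) sl = u"
    proof (rule nth_equalityI)
      show "length (map (\<lambda>k. xs!k) sl) = length u" using lsl lu by simp
      fix j assume "j < length (map (\<lambda>k. xs!k) sl)"
      hence j: "j < s" using lsl by simp
      have "sl ! j \<in> S" using j lsl ssl nth_mem by blast
      thus "map (\<lambda>k. xs!k) sl ! j = u ! j" using a j lsl pos2 by auto
    qed
  qed
  have Eexp: "E xs xs' = (\<Sum>u\<in>tuples s. \<Sum>v\<in>tuples s. A u v * (\<Prod>k<n. F u v k (xs!k) (xs'!k)))"
    if xs: "length xs = n" and xs': "length xs' = n" for xs xs'
  proof -
    have "(\<Prod>k<n. F u v k (xs!k) (xs'!k)) =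
        of_bool (map (\<lambda>k. xs!k) sl = u) * of_bool (map (\<lambda>k. xs'!k) sl = v) *
        of_bool (\<forall>k\<in>{..<n} - S. xs!k = xs'!k)"
      if "length u = s" "length v = s" for u v
    proof -
      have "(\<Prod>k\<in>S. F u v k (xs!k) (xs'!k)) = (\<Prod>k\<in>S. of_bool (xs!k = u ! pos k)) * (\<Prod>k\<in>S. of_bool (xs'!k = v ! pos k))"
        unfolding F_def by (simp add: prod.distrib)
      also have "\<dots> = of_bool (map (\<lambda>k. xs!k) sl = u) * of_bool (map (\<lambda>k. xs'!k) sl = v)"
        using finS mapeq that by (simp add: prod_of_bool_eq)
      finally have 1: "(\<Prod>k\<in>S. F u v k (xs!k) (xs'!k)) = \<dots>" .
      have 2: "(\<Prod>k\<in>{..<n}-S. F u v k (xs!k) (xs'!k)) = of_bool (\<forall>k\<in>{..<n} - S. xs!k = xs'!k)"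
        unfolding F_def by (simp add: prod_of_bool_eq)
      show ?thesis unfolding split 1 2 ..
    qed
    hence "(\<Sum>u\<in>tuples s. \<Sum>v\<in>tuples s. A u v * (\<Prod>k<n. F u v k (xs!k) (xs'!k)))
        = (\<Sum>u\<in>tuples s. \<Sum>v\<in>tuples s. A u v * (of_bool (map (\<lambda>k. xs!k) sl = u) * of_bool (map (\<lambda>k. xs'!k) sl = v) *
        of_bool (\<forall>k\<in>{..<n} - S. xs!k = xs'!k)))"
      by (intro sum.cong refl) auto
    also have "\<dots> = (\<Sum>u\<in>tuples s. of_bool (map (\<lambda>k. xs!k) sl = u) * (\<Sum>v\<in>tuples s. of_bool (map (\<lambda>k. xs'!k) sl = v) *
         (A u v * of_bool (\<forall>k\<in>{..<n} - S. xs!k = xs'!k))))"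
      by (simp add: sum_distrib_left mult_ac)
    also have "\<dots> = A (map (\<lambda>k. xs!k) sl) (map (\<lambda>k. xs'!k) sl) * of_bool (\<forall>k\<in>{..<n} - S. xs!k = xs'!k)"
      using lsl by (simp add: sum_of_bool_mult)
    also have "\<dots> = E xs xs'" using E xs xs' unfolding sl_def by simp
    finally show ?thesis by simp
  qed
  have "Nker n E g ys zs = (\<Sum>xs\<in>tuples n. \<Sum>xs'\<in>tuples n. \<Sum>u\<in>tuples s. \<Sum>v\<in>tuples s.
      A u v * (\<Prod>k<n. cnj (g $ (xs!k) $ (ys!k)) * F u v k (xs!k) (xs'!k) * g $ (xs'!k) $ (zs!k)))"
    unfolding Nker_def tensor_pow_def
    by (intro sum.cong refl) (simp add: Eexp sum_distrib_left sum_distrib_right prod.distrib mult_ac)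
  also have "\<dots> = (\<Sum>u\<in>tuples s. \<Sum>v\<in>tuples s. A u v * (\<Sum>xs\<in>tuples n. \<Sum>xs'\<in>tuples n.
      (\<Prod>k<n. cnj (g $ (xs!k) $ (ys!k)) * F u v k (xs!k) (xs'!k) * g $ (xs'!k) $ (zs!k))))"
    by (subst sum_swap22) (simp add: sum_distrib_left)
  also have "\<dots> = (\<Sum>u\<in>tuples s. \<Sum>v\<in>tuples s. A u v *
      (\<Prod>k<n. \<Sum>x\<in>UNIV. \<Sum>x'\<in>UNIV. cnj (g $ x $ (ys!k)) * F u v k x x' * g $ x' $ (zs!k)))"
    by (subst sum_tuples2_prod[symmetric]) simp
  also have "\<dots> = (\<Sum>u\<in>tuples s. \<Sum>v\<in>tuples s. A u v *
      ((\<Prod>k\<in>S. cnj (g $ (u ! pos k) $ (ys!k)) * g $ (v ! pos k) $ (zs!k)) *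
       (\<Prod>k\<in>{..<n}-S. of_bool (ys!k = zs!k))))"
  proof (intro sum.cong refl arg_cong2[where f="(*)"])
    fix u v
    have inS: "(\<Sum>x\<in>UNIV. \<Sum>x'\<in>UNIV. cnj (g $ x $ (ys!k)) * F u v k x x' * g $ x' $ (zs!k))
        = cnj (g $ (u ! pos k) $ (ys!k)) * g $ (v ! pos k) $ (zs!k)" if "k \<in> S" for k
    proof -
      have "(\<Sum>x\<in>UNIV. \<Sum>x'\<in>UNIV. cnj (g $ x $ (ys!k)) * F u v k x x' * g $ x' $ (zs!k))
        = (\<Sum>x\<in>UNIV. of_bool (x = u ! pos k) * (\<Sum>x'\<in>UNIV. of_bool (x' = v ! pos k) * (cnj (g $ x $ (ys!k)) * g $ x' $ (zs!k))))"
        unfolding F_def using that by (intro sum.cong refl) (simp add: sum_distrib_left mult_ac)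
      also have "\<dots> = cnj (g $ (u ! pos k) $ (ys!k)) * g $ (v ! pos k) $ (zs!k)"
        by (simp add: sum_of_bool_mult')
      finally show ?thesis .
    qed
    have outS: "(\<Sum>x\<in>UNIV. \<Sum>x'\<in>UNIV. cnj (g $ x $ (ys!k)) * F u v k x x' * g $ x' $ (zs!k))
        = of_bool (ys!k = zs!k)" if "k \<notin> S" for k
    proof -
      have "(\<Sum>x\<in>UNIV. \<Sum>x'\<in>UNIV. cnj (g $ x $ (ys!k)) * F u v k x x' * g $ x' $ (zs!k))
        = (\<Sum>x\<in>UNIV. (\<Sum>x'\<in>UNIV. of_bool (x = x') * (cnj (g $ x $ (ys!k)) * g $ x' $ (zs!k))))"
        unfolding F_def using that by (intro sum.cong refl) (auto simp: mult_ac)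
      also have "\<dots> = (\<Sum>x\<in>UNIV. cnj (g $ x $ (ys!k)) * g $ x $ (zs!k))"
        by (simp add: sum_of_bool_mult)
      also have "\<dots> = of_bool (ys!k = zs!k)" by (rule unitary_col[OF unit])
      finally show ?thesis .
    qed
    show "(\<Prod>k<n. \<Sum>x\<in>UNIV. \<Sum>x'\<in>UNIV. cnj (g $ x $ (ys!k)) * F u v k x x' * g $ x' $ (zs!k)) =
       (\<Prod>k\<in>S. cnj (g $ (u ! pos k) $ (ys!k)) * g $ (v ! pos k) $ (zs!k)) *
       (\<Prod>k\<in>{..<n}-S. of_bool (ys!k = zs!k))"
      unfolding split using inS outS by simp
  qed
  also have "\<dots> = (\<Prod>k\<in>{..<n}-S. of_bool (ys!k = zs!k)) *
     (\<Sum>u\<in>tuples s. \<Sum>v\<in>tuples s. A u v *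
        moment_entry s g (zip v u) (zip (map (\<lambda>k. zs!k) sl) (map (\<lambda>k. ys!k) sl)))"
  proof -
    have "(\<Prod>k\<in>S. cnj (g $ (u ! pos k) $ (ys!k)) * g $ (v ! pos k) $ (zs!k)) =
       moment_entry s g (zip v u) (zip (map (\<lambda>k. zs!k) sl) (map (\<lambda>k. ys!k) sl))"
      if "length u = s" "length v = s" for u v
    proof -
      have "(\<Prod>k\<in>S. cnj (g $ (u ! pos k) $ (ys!k)) * g $ (v ! pos k) $ (zs!k))
        = (\<Prod>j<s. cnj (g $ (u ! pos (sl!j)) $ (ys!(sl!j))) * g $ (v ! pos (sl!j)) $ (zs!(sl!j)))"
        by (rule prod.reindex_bij_betw[OF bij, symmetric])
      also have "\<dots> = moment_entry s g (zip v u) (zip (map (\<lambda>k. zs!k) sl) (map (\<lambda>k. ys!k) sl))"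
        unfolding moment_entry_def using that lsl pos2 by (intro prod.cong refl) (simp add: mult.commute)
      finally show ?thesis .
    qed
    thus ?thesis by (simp add: sum_distrib_left mult_ac)
  qed
  finally show ?thesis unfolding sl_def s_def .
qed




lemma moment_mult:
  fixes g h :: "('q::finite) cmat"
  shows "moment_entry t (g ** h) a b = (\<Sum>cs\<in>tuples t. moment_entry t g a cs * moment_entry t h cs b)"
proof -
  have "moment_entry t (g ** h) a b = (\<Prod>k<t. \<Sum>c\<in>UNIV.
      g $ fst (a!k) $ fst c * cnj (g $ snd (a!k) $ snd c) * (h $ fst c $ fst (b!k) * cnj (h $ snd c $ snd (b!k))))"
    unfolding moment_entry_def
  proof (intro prod.cong refl)
    fix k
    have "(g ** h) $ fst (a!k) $ fst (b!k) * cnj ((g ** h) $ snd (a!k) $ snd (b!k))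
      = (\<Sum>z\<in>UNIV. g $ fst (a!k) $ z * h $ z $ fst (b!k)) * (\<Sum>z'\<in>UNIV. cnj (g $ snd (a!k) $ z' * h $ z' $ snd (b!k)))"
      unfolding matrix_matrix_mult_def by simp
    also have "\<dots> = (\<Sum>z\<in>UNIV. \<Sum>z'\<in>UNIV. g $ fst (a!k) $ z * h $ z $ fst (b!k) * cnj (g $ snd (a!k) $ z' * h $ z' $ snd (b!k)))"
      by (rule sum_product)
    also have "\<dots> = (\<Sum>c\<in>UNIV \<times> UNIV. g $ fst (a!k) $ fst c * cnj (g $ snd (a!k) $ snd c) * (h $ fst c $ fst (b!k) * cnj (h $ snd c $ snd (b!k))))"
      unfolding sum.cartesian_product by (intro sum.cong refl) (auto simp: mult_ac)
    finally show "(g ** h) $ fst (a!k) $ fst (b!k) * cnj ((g ** h) $ snd (a!k) $ snd (b!k)) =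
      (\<Sum>c\<in>UNIV. g $ fst (a!k) $ fst c * cnj (g $ snd (a!k) $ snd c) * (h $ fst c $ fst (b!k) * cnj (h $ snd c $ snd (b!k))))"
      by (simp add: UNIV_Times_UNIV)
  qed
  also have "\<dots> = (\<Sum>cs\<in>tuples t. \<Prod>k<t. g $ fst (a!k) $ fst (cs!k) * cnj (g $ snd (a!k) $ snd (cs!k)) *
      (h $ fst (cs!k) $ fst (b!k) * cnj (h $ snd (cs!k) $ snd (b!k))))"
    by (rule sum_tuples_prod[symmetric])
  also have "\<dots> = (\<Sum>cs\<in>tuples t. moment_entry t g a cs * moment_entry t h cs b)"
    unfolding moment_entry_def by (simp add: prod.distrib)
  finally show ?thesis .
qed

lemma prod_lessThan_add:
  fixes r s :: nat
  shows "(\<Prod>k<s+r. f k) = (\<Prod>k<s. f k) * (\<Prod>k<r. f (s+k) :: 'b::comm_monoid_mult)"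
  by (induction r) (auto simp: mult_ac)

lemma moment_append:
  assumes "length a = s" "length b = s"
  shows "moment_entry (s + r) g (a @ a') (b @ b') = moment_entry s g a b * moment_entry r g a' b'"
  unfolding moment_entry_def prod_lessThan_add using assms
  by (simp add: nth_append)

lemma moment_pad:
  fixes g :: "('q::finite) cmat"
  assumes unit: "cadj g ** g = Finite_Cartesian_Product.mat 1"
    and st: "s \<le> t" and a: "length a = s" and b: "length b = s"
  shows "moment_entry s g a b = (\<Sum>ps\<in>tuples (t-s).
     moment_entry t g (a @ map (\<lambda>p. (p,p)) ps) (b @ replicate (t-s) (q0,q0)))"
proof -
  have "(\<Sum>ps\<in>tuples (t-s). moment_entry (t-s) g (map (\<lambda>p. (p,p)) ps) (replicate (t-s) (q0,q0)))
     = (\<Sum>ps\<in>tuples (t-s). \<Prod>k<t-s. g $ (ps!k) $ q0 * cnj (g $ (ps!k) $ q0))"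
    unfolding moment_entry_def by (intro sum.cong refl prod.cong) auto
  also have "\<dots> = (\<Prod>k<t-s. \<Sum>p\<in>UNIV. g $ p $ q0 * cnj (g $ p $ q0))"
    by (rule sum_tuples_prod)
  also have "\<dots> = 1"
    using unitary_col[OF unit, of q0 q0] by (simp add: mult.commute)
  finally have 1: "(\<Sum>ps\<in>tuples (t-s). moment_entry (t-s) g (map (\<lambda>p. (p,p)) ps) (replicate (t-s) (q0,q0))) = 1" .
  have "(\<Sum>ps\<in>tuples (t-s). moment_entry t g (a @ map (\<lambda>p. (p,p)) ps) (b @ replicate (t-s) (q0,q0)))
    = (\<Sum>ps\<in>tuples (t-s). moment_entry s g a b * moment_entry (t-s) g (map (\<lambda>p. (p,p)) ps) (replicate (t-s) (q0,q0)))"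
  proof (intro sum.cong refl)
    fix ps :: "'q list"
    have "t = s + (t - s)" using st by simp
    hence "moment_entry t g (a @ map (\<lambda>p. (p,p)) ps) (b @ replicate (t-s) (q0,q0))
      = moment_entry (s + (t - s)) g (a @ map (\<lambda>p. (p,p)) ps) (b @ replicate (t-s) (q0,q0))" by simp
    also have "\<dots> = moment_entry s g a b * moment_entry (t-s) g (map (\<lambda>p. (p,p)) ps) (replicate (t-s) (q0,q0))"
      by (rule moment_append[OF a b])
    finally show "moment_entry t g (a @ map (\<lambda>p. (p,p)) ps) (b @ replicate (t-s) (q0,q0))
      = moment_entry s g a b * moment_entry (t-s) g (map (\<lambda>p. (p,p)) ps) (replicate (t-s) (q0,q0))" .
  qed
  also have "\<dots> = moment_entry s g a b" using 1 by (simp add: sum_distrib_left[symmetric])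
  finally show ?thesis by simp
qed

lemma continuous_moment: "continuous_on UNIV (\<lambda>U::('q::finite) cmat. moment_entry t U a b)"
  unfolding moment_entry_def by (intro continuous_intros)

lemma continuous_rmult: "continuous_on UNIV (\<lambda>U::('q::finite) cmat. U ** h)"
  unfolding matrix_matrix_mult_def by (intro continuous_intros)




lemma unitary_entry_le1:
  fixes U :: "('q::finite) cmat"
  assumes "U \<in> unitary_group"
  shows "cmod (U $ i $ j) \<le> 1"
proof -
  have u: "cadj U ** U = Finite_Cartesian_Product.mat 1" using assms unfolding unitary_group_def by simp
  have "(\<Sum>x\<in>UNIV. complex_of_real ((cmod (U $ x $ j))\<^sup>2)) = (\<Sum>x\<in>UNIV. cnj (U $ x $ j) * U $ x $ j)"
    by (intro sum.cong refl) (simp only: complex_norm_square mult.commute)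
  also have "\<dots> = 1" using unitary_col[OF u, of j j] by simp
  finally have "(\<Sum>x\<in>UNIV. complex_of_real ((cmod (U $ x $ j))\<^sup>2)) = 1" .
  hence s: "(\<Sum>x\<in>UNIV. (cmod (U $ x $ j))\<^sup>2) = 1"
    by (simp only: of_real_sum[symmetric] of_real_eq_1_iff)
  have "(cmod (U $ i $ j))\<^sup>2 \<le> (\<Sum>x\<in>UNIV. (cmod (U $ x $ j))\<^sup>2)"
    by (rule member_le_sum) auto
  hence "(cmod (U $ i $ j))\<^sup>2 \<le> 1" using s by simp
  thus ?thesis by (simp add: power_le_one_iff abs_le_square_iff)
qed

lemma moment_bound:
  fixes U :: "('q::finite) cmat"
  assumes "U \<in> unitary_group"
  shows "cmod (moment_entry t U a b) \<le> 1"
proof -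
  have "cmod (moment_entry t U a b) = (\<Prod>k<t. cmod (U $ fst (a!k) $ fst (b!k) * cnj (U $ snd (a!k) $ snd (b!k))))"
    unfolding moment_entry_def by (simp add: prod_norm)
  also have "\<dots> \<le> 1"
    using unitary_entry_le1[OF assms]
    by (intro prod_le_1) (auto simp: norm_mult intro: mult_le_one)
  finally show ?thesis .
qed

lemma haar_integrable:
  fixes \<mu> :: "('q::finite) cmat measure"
  assumes "haar_measure \<mu>"
  shows "integrable \<mu> (\<lambda>U. moment_entry t U a b)"
proof -
  interpret prob_space \<mu> using assms unfolding haar_measure_def by simp
  have sets: "sets \<mu> = sets borel" using assms unfolding haar_measure_def by simp
  have em: "emeasure \<mu> unitary_group = 1" using assms unfolding haar_measure_def by simp
  have "prob unitary_group = 1" using em by (simp add: measure_def)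
  hence ae: "AE U in \<mu>. U \<in> unitary_group" by (rule AE_prob_1)
  have meas: "(\<lambda>U. moment_entry t U a b) \<in> borel_measurable \<mu>"
    using borel_measurable_continuous_onI[OF continuous_moment] measurable_cong_sets[OF sets refl]
    by blast
  have ae2: "AE U in \<mu>. cmod (moment_entry t U a b) \<le> 1"
    using ae by eventually_elim (rule moment_bound)
  show ?thesis by (rule integrable_const_bound[OF ae2 meas])
qed

lemma haar_right_inv:
  fixes \<mu> :: "('q::finite) cmat measure"
  assumes "haar_measure \<mu>" and h: "h \<in> unitary_group"
  shows "integral\<^sup>L \<mu> (\<lambda>U. moment_entry t (U ** h) a b) = integral\<^sup>L \<mu> (\<lambda>U. moment_entry t U a b)"
proof -
  have sets: "sets \<mu> = sets borel" using assms unfolding haar_measure_def by simp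
  have d: "distr \<mu> borel (\<lambda>U. U ** h) = \<mu>" using assms unfolding haar_measure_def by simp
  have m: "(\<lambda>U. U ** h) \<in> measurable \<mu> borel"
    using borel_measurable_continuous_onI[OF continuous_rmult] measurable_cong_sets[OF sets refl]
    by blast
  have "integral\<^sup>L \<mu> (\<lambda>U. moment_entry t U a b) = integral\<^sup>L (distr \<mu> borel (\<lambda>U. U ** h)) (\<lambda>U. moment_entry t U a b)"
    using d by simp
  also have "\<dots> = integral\<^sup>L \<mu> (\<lambda>U. moment_entry t (U ** h) a b)"
    by (rule integral_distr[OF m borel_measurable_continuous_onI[OF continuous_moment]])
  finally show ?thesis by simp
qed

lemma moment_invariant_t:
  fixes \<mu> :: "('q::finite) cmat measure" and G :: "'q cmat set" and w :: "'q cmat \<Rightarrow> complex"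
  assumes haar: "haar_measure \<mu>"
    and D: "\<forall>a b. length a = t \<longrightarrow> length b = t \<longrightarrow>
          (1 / of_nat (card G)) * (\<Sum>g\<in>G. w g * moment_entry t g a b) = integral\<^sup>L \<mu> (\<lambda>U. moment_entry t U a b)"
    and cG: "card G > 0"
    and h: "h \<in> unitary_group"
    and a: "length a = t" and b: "length b = t"
  shows "(\<Sum>g\<in>G. w g * moment_entry t (g ** h) a b) = (\<Sum>g\<in>G. w g * moment_entry t g a b)"
proof -
  have D': "(\<Sum>g\<in>G. w g * moment_entry t g a' b') = of_nat (card G) * integral\<^sup>L \<mu> (\<lambda>U. moment_entry t U a' b')"
    if "length a' = t" "length b' = t" for a' b'
    using D that cG by (auto simp: field_simps)
  have "(\<Sum>g\<in>G. w g * moment_entry t (g ** h) a b)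
      = (\<Sum>cs\<in>tuples t. moment_entry t h cs b * (\<Sum>g\<in>G. w g * moment_entry t g a cs))"
    by (simp add: moment_mult sum_distrib_left sum_distrib_right mult_ac sum.swap[of _ G])
  also have "\<dots> = (\<Sum>cs\<in>tuples t. moment_entry t h cs b * (of_nat (card G) * integral\<^sup>L \<mu> (\<lambda>U. moment_entry t U a cs)))"
    using D' a by (intro sum.cong refl) simp
  also have "\<dots> = of_nat (card G) * integral\<^sup>L \<mu> (\<lambda>U. \<Sum>cs\<in>tuples t. moment_entry t U a cs * moment_entry t h cs b)"
  proof -
    have "integral\<^sup>L \<mu> (\<lambda>U. \<Sum>cs\<in>tuples t. moment_entry t U a cs * moment_entry t h cs b)
      = (\<Sum>cs\<in>tuples t. integral\<^sup>L \<mu> (\<lambda>U. moment_entry t U a cs * moment_entry t h cs b))"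
      by (rule Bochner_Integration.integral_sum[where I="tuples t" and f="\<lambda>cs U. moment_entry t U a cs * moment_entry t h cs b"])
         (intro integrable_mult_left integrable_mult_right haar_integrable[OF haar])
    also have "\<dots> = (\<Sum>cs\<in>tuples t. integral\<^sup>L \<mu> (\<lambda>U. moment_entry t U a cs) * moment_entry t h cs b)"
      by simp
    finally show ?thesis by (simp add: sum_distrib_left mult_ac)
  qed
  also have "\<dots> = of_nat (card G) * integral\<^sup>L \<mu> (\<lambda>U. moment_entry t (U ** h) a b)"
    by (simp add: moment_mult)
  also have "\<dots> = of_nat (card G) * integral\<^sup>L \<mu> (\<lambda>U. moment_entry t U a b)"
    by (simp add: haar_right_inv[OF haar h])
  also have "\<dots> = (\<Sum>g\<in>G. w g * moment_entry t g a b)" using D' a b by simp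
  finally show ?thesis .
qed




lemma unitary_cadj_mult: "U \<in> unitary_group \<Longrightarrow> cadj U ** U = Finite_Cartesian_Product.mat 1"
  unfolding unitary_group_def by simp

lemma sum_lin3:
  "(\<Sum>g\<in>G. w g * (P * (\<Sum>u\<in>U. \<Sum>v\<in>V. A u v * f g u v))) =
   P * (\<Sum>u\<in>U. \<Sum>v\<in>V. A u v * (\<Sum>g\<in>G. w g * f g u v :: 'a::comm_semiring_1))"
proof -
  have "(\<Sum>g\<in>G. w g * (P * (\<Sum>u\<in>U. \<Sum>v\<in>V. A u v * f g u v))) =
     (\<Sum>g\<in>G. \<Sum>u\<in>U. \<Sum>v\<in>V. P * A u v * (w g * f g u v))"
    by (simp add: sum_distrib_left mult_ac)
  also have "\<dots> = (\<Sum>u\<in>U. \<Sum>v\<in>V. \<Sum>g\<in>G. P * A u v * (w g * f g u v))"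
    by (rule sum_swap3)
  also have "\<dots> = P * (\<Sum>u\<in>U. \<Sum>v\<in>V. A u v * (\<Sum>g\<in>G. w g * f g u v))"
    by (simp add: sum_distrib_left mult_ac)
  finally show ?thesis .
qed

locale design_setup =
  fixes \<mu> :: "('q::finite) cmat measure" and G :: "'q cmat set" and w :: "'q cmat \<Rightarrow> complex" and t :: nat
  assumes haar: "haar_measure \<mu>"
    and D: "\<forall>a b. length a = t \<longrightarrow> length b = t \<longrightarrow>
          (1 / of_nat (card G)) * (\<Sum>g\<in>G. w g * moment_entry t g a b) = integral\<^sup>L \<mu> (\<lambda>U. moment_entry t U a b)"
    and cG: "card G > 0"
    and GU: "G \<subseteq> unitary_group"
    and Gmult: "\<And>g h. g \<in> G \<Longrightarrow> h \<in> G \<Longrightarrow> g ** h \<in> G"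
begin

lemma moment_invariant_s:
  assumes h: "h \<in> G" and st: "s \<le> t" and a: "length a = s" and b: "length b = s"
  shows "(\<Sum>g\<in>G. w g * moment_entry s (g ** h) a b) = (\<Sum>g\<in>G. w g * moment_entry s g a b)"
proof -
  define q0 :: 'q where "q0 = undefined"
  let ?pa = "\<lambda>ps. a @ map (\<lambda>p. (p,p)) ps" and ?pb = "b @ replicate (t-s) (q0,q0)"
  have hU: "h \<in> unitary_group" using h GU by auto
  have "(\<Sum>g\<in>G. w g * moment_entry s (g ** h) a b)
     = (\<Sum>g\<in>G. w g * (\<Sum>ps\<in>tuples (t-s). moment_entry t (g ** h) (?pa ps) ?pb))"
  proof (intro sum.cong refl)
    fix g assume g: "g \<in> G"
    hence "g ** h \<in> unitary_group" using GU Gmult h by auto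
    thus "w g * moment_entry s (g ** h) a b = w g * (\<Sum>ps\<in>tuples (t-s). moment_entry t (g ** h) (?pa ps) ?pb)"
      using moment_pad[OF unitary_cadj_mult[OF \<open>g ** h \<in> unitary_group\<close>] st a b, of q0] by simp
  qed
  also have "\<dots> = (\<Sum>ps\<in>tuples (t-s). \<Sum>g\<in>G. w g * moment_entry t (g ** h) (?pa ps) ?pb)"
    by (simp add: sum_distrib_left sum.swap[of _ G])
  also have "\<dots> = (\<Sum>ps\<in>tuples (t-s). \<Sum>g\<in>G. w g * moment_entry t g (?pa ps) ?pb)"
  proof (rule sum.cong[OF refl])
    fix ps :: "'q list" assume "ps \<in> tuples (t-s)"
    thus "(\<Sum>g\<in>G. w g * moment_entry t (g ** h) (?pa ps) ?pb) = (\<Sum>g\<in>G. w g * moment_entry t g (?pa ps) ?pb)"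
      by (intro moment_invariant_t[OF haar D cG hU]) (use a b st in auto)
  qed
  also have "\<dots> = (\<Sum>g\<in>G. w g * (\<Sum>ps\<in>tuples (t-s). moment_entry t g (?pa ps) ?pb))"
    by (simp add: sum_distrib_left sum.swap[of _ G])
  also have "\<dots> = (\<Sum>g\<in>G. w g * moment_entry s g a b)"
  proof (intro sum.cong refl)
    fix g assume g: "g \<in> G"
    hence "g \<in> unitary_group" using GU by auto
    thus "w g * (\<Sum>ps\<in>tuples (t-s). moment_entry t g (?pa ps) ?pb) = w g * moment_entry s g a b"
      using moment_pad[OF unitary_cadj_mult[OF \<open>g \<in> unitary_group\<close>] st a b, of q0] by simp
  qed
  finally show ?thesis .
qed

lemma Nker_invariant_local:
  assumes h: "h \<in> G" and lo: "local_op n t E" and ys: "length ys = n" and zs: "length zs = n"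
  shows "(\<Sum>g\<in>G. w g * Nker n E (g ** h) ys zs) = (\<Sum>g\<in>G. w g * Nker n E g ys zs)"
proof -
  obtain S A where S: "S \<subseteq> {..<n}" "card S \<le> t" and E: "\<forall>xs\<in>tuples n. \<forall>ys\<in>tuples n.
        E xs ys = (if (\<forall>k\<in>{..<n} - S. xs!k = ys!k)
                   then A (map (\<lambda>k. xs!k) (sorted_list_of_set S)) (map (\<lambda>k. ys!k) (sorted_list_of_set S))
                   else 0)"
    using lo unfolding local_op_def by blast
  define sl where "sl = sorted_list_of_set S"
  have finS: "finite S" using S finite_subset by blast
  have lsl: "length sl = card S" unfolding sl_def by (simp add: length_sorted_list_of_set)
  define P where "P = (\<Prod>k\<in>{..<n}-S. (of_bool (ys!k = zs!k) :: complex))"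
  define bb where "bb = zip (map (\<lambda>k. zs!k) sl) (map (\<lambda>k. ys!k) sl)"
  have Ng: "Nker n E g ys zs = P * (\<Sum>u\<in>tuples (card S). \<Sum>v\<in>tuples (card S). A u v *
        moment_entry (card S) g (zip v u) bb)" if "g \<in> unitary_group" for g
    using Nker_local[OF unitary_cadj_mult[OF that] S(1) E ys zs] unfolding P_def bb_def sl_def .
  have "(\<Sum>g\<in>G. w g * Nker n E (g ** h) ys zs) = (\<Sum>g\<in>G. w g * (P * (\<Sum>u\<in>tuples (card S). \<Sum>v\<in>tuples (card S). A u v *
        moment_entry (card S) (g ** h) (zip v u) bb)))"
    using Ng Gmult h GU by (intro sum.cong refl) auto
  also have "\<dots> = P * (\<Sum>u\<in>tuples (card S). \<Sum>v\<in>tuples (card S). A u v *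
        (\<Sum>g\<in>G. w g * moment_entry (card S) (g ** h) (zip v u) bb))"
    by (rule sum_lin3)
  also have "\<dots> = P * (\<Sum>u\<in>tuples (card S). \<Sum>v\<in>tuples (card S). A u v *
        (\<Sum>g\<in>G. w g * moment_entry (card S) g (zip v u) bb))"
  proof -
    have eq: "(\<Sum>g\<in>G. w g * moment_entry (card S) (g ** h) (zip v u) bb) = (\<Sum>g\<in>G. w g * moment_entry (card S) g (zip v u) bb)"
      if "u \<in> tuples (card S)" "v \<in> tuples (card S)" for u v :: "'q list"
      using lsl that unfolding bb_def by (intro moment_invariant_s[OF h S(2)]) auto
    show ?thesis by (intro arg_cong[where f="(*) P"] sum.cong refl; simp add: eq)
  qed
  also have "\<dots> = (\<Sum>g\<in>G. w g * (P * (\<Sum>u\<in>tuples (card S). \<Sum>v\<in>tuples (card S). A u v *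
        moment_entry (card S) g (zip v u) bb)))"
    by (rule sum_lin3[symmetric])
  also have "\<dots> = (\<Sum>g\<in>G. w g * Nker n E g ys zs)"
    using Ng GU by (intro sum.cong refl) auto
  finally show ?thesis .
qed

lemma Nker_invariant:
  assumes h: "h \<in> G" and wl: "weight_le n t E" and ys: "length ys = n" and zs: "length zs = n"
  shows "(\<Sum>g\<in>G. w g * Nker n E (g ** h) ys zs) = (\<Sum>g\<in>G. w g * Nker n E g ys zs)"
proof -
  obtain m :: nat and Es where loc: "\<forall>i<m. local_op n t (Es i)" and E: "\<forall>xs\<in>tuples n. \<forall>ys\<in>tuples n. E xs ys = (\<Sum>i<m. Es i xs ys)"
    using wl unfolding weight_le_def by blast
  have NE: "Nker n E g ys zs = (\<Sum>i<m. Nker n (Es i) g ys zs)" for g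
    unfolding Nker_def using E
    by (simp add: sum_distrib_left sum_distrib_right sum.swap[of _ "{..<m}"] mult_ac)
  have "(\<Sum>g\<in>G. w g * Nker n E (g ** h) ys zs) = (\<Sum>i<m. \<Sum>g\<in>G. w g * Nker n (Es i) (g ** h) ys zs)"
    by (simp add: NE sum_distrib_left sum.swap[of _ G])
  also have "\<dots> = (\<Sum>i<m. \<Sum>g\<in>G. w g * Nker n (Es i) g ys zs)"
    using Nker_invariant_local[OF h _ ys zs] loc by simp
  also have "\<dots> = (\<Sum>g\<in>G. w g * Nker n E g ys zs)"
    by (simp add: NE sum_distrib_left sum.swap[of _ G])
  finally show ?thesis .
qed

lemma twirl_invariant:
  assumes h: "h \<in> G" and wl: "weight_le n t E"
  shows "(\<Sum>g\<in>G. w g * inner_n n (apply_op n (tensor_pow n (g ** h)) \<psi>) (apply_op n E (apply_op n (tensor_pow n (g ** h)) \<phi>)))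
       = (\<Sum>g\<in>G. w g * inner_n n (apply_op n (tensor_pow n g) \<psi>) (apply_op n E (apply_op n (tensor_pow n g) \<phi>)))"
proof -
  have "(\<Sum>g\<in>G. w g * inner_n n (apply_op n (tensor_pow n (g ** h)) \<psi>) (apply_op n E (apply_op n (tensor_pow n (g ** h)) \<phi>)))
      = (\<Sum>ys\<in>tuples n. \<Sum>zs\<in>tuples n. cnj (\<psi> ys) * \<phi> zs * (\<Sum>g\<in>G. w g * Nker n E (g ** h) ys zs))"
    by (simp add: inner_twirl sum_distrib_left sum_distrib_right mult_ac sum_swap3[where A=G])
  also have "\<dots> = (\<Sum>ys\<in>tuples n. \<Sum>zs\<in>tuples n. cnj (\<psi> ys) * \<phi> zs * (\<Sum>g\<in>G. w g * Nker n E g ys zs))"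
    using Nker_invariant[OF h wl] by (intro sum.cong refl) auto
  also have "\<dots> = (\<Sum>g\<in>G. w g * inner_n n (apply_op n (tensor_pow n g) \<psi>) (apply_op n E (apply_op n (tensor_pow n g) \<phi>)))"
    by (simp add: inner_twirl sum_distrib_left sum_distrib_right mult_ac sum_swap3[where A=G])
  finally show ?thesis .
qed

end




definition form :: "complex^'d^'d \<Rightarrow> complex^'d \<Rightarrow> complex^'d \<Rightarrow> complex" where
  "form M a b = (\<Sum>i\<in>UNIV. \<Sum>j\<in>UNIV. cnj (a$i) * M$i$j * b$j)"

lemma form_add_r: "form M a (b + c) = form M a b + form M a c"
  unfolding form_def by (simp add: distrib_left sum.distrib)
lemma form_add_l: "form M (a + b) c = form M a c + form M b c"
  unfolding form_def by (simp add: distrib_right sum.distrib)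
lemma form_smult_r: "form M a (c *s b) = c * form M a b"
  unfolding form_def by (simp add: sum_distrib_left mult_ac)
lemma form_smult_l: "form M (c *s a) b = cnj c * form M a b"
  unfolding form_def by (simp add: sum_distrib_left mult_ac)
lemma form_zero_r[simp]: "form M a 0 = 0" unfolding form_def by simp
lemma form_zero_l[simp]: "form M 0 a = 0" unfolding form_def by simp
lemma form_diff_r: "form M a (b - c) = form M a b - form M a c"
  unfolding form_def by (simp add: right_diff_distrib sum_subtractf)
lemma form_sum_r: "finite K \<Longrightarrow> form M a (\<Sum>k\<in>K. f k) = (\<Sum>k\<in>K. form M a (f k))"
  by (induction K rule: finite_induct) (auto simp: form_add_r)
lemma form_sum_l: "finite K \<Longrightarrow> form M (\<Sum>k\<in>K. f k) b = (\<Sum>k\<in>K. form M (f k) b)"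
  by (induction K rule: finite_induct) (auto simp: form_add_l)

lemma vec_expand: "(x::complex^'d) = (\<Sum>i\<in>UNIV. x$i *s axis i 1)"
  unfolding Finite_Cartesian_Product.vec_eq_iff
proof
  fix i
  have "(\<Sum>j\<in>UNIV. x$j *s axis j (1::complex)) $ i = (\<Sum>j\<in>UNIV. if i = j then x$j else 0)"
    unfolding sum_component by (intro sum.cong) (auto simp: axis_def)
  thus "x $ i = (\<Sum>j\<in>UNIV. x$j *s axis j 1) $ i" by simp
qed

fun gs :: "(complex^'d \<Rightarrow> complex^'d \<Rightarrow> complex) \<Rightarrow> (complex^'d) list \<Rightarrow> (complex^'d) list" where
  "gs B [] = []"
| "gs B (v # vs) = (let os = gs B vs; w = v - (\<Sum>k<length os. B (os!k) v *s os!k) in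
     if w = 0 then os else (complex_of_real (inverse (sqrt (Re (B w w)))) *s w) # os)"

locale herm =
  fixes Gm :: "complex^'d::finite^'d"
  assumes herm: "\<And>a b. form Gm b a = cnj (form Gm a b)"
    and pos: "\<And>a. Re (form Gm a a) \<ge> 0"
    and def: "\<And>a. form Gm a a = 0 \<Longrightarrow> a = 0"
begin

abbreviation "B \<equiv> form Gm"

lemma B_real: "B a a = complex_of_real (Re (B a a))"
  using herm[of a a] by (simp add: complex_eq_iff)

lemma gs_props:
  "(\<forall>i<length (gs B vs). \<forall>j<length (gs B vs). B (gs B vs ! i) (gs B vs ! j) = of_bool (i = j)) \<and>
   (\<forall>v\<in>set vs. v = (\<Sum>k<length (gs B vs). B (gs B vs ! k) v *s gs B vs ! k))"
proof (induction vs)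
  case Nil
  then show ?case by simp
next
  case (Cons v vs)
  define os where "os = gs B vs"
  define m where "m = length os"
  have on: "\<forall>i<m. \<forall>j<m. B (os ! i) (os ! j) = of_bool (i = j)" and ex: "\<forall>u\<in>set vs. u = (\<Sum>k<m. B (os ! k) u *s os ! k)"
    using Cons.IH unfolding os_def m_def by auto
  define w where "w = v - (\<Sum>k<m. B (os!k) v *s os!k)"
  have gsv: "gs B (v # vs) = (if w = 0 then os else (complex_of_real (inverse (sqrt (Re (B w w)))) *s w) # os)"
    unfolding os_def w_def m_def by (simp add: Let_def)
  have Bow: "B (os!j) w = 0" if "j < m" for j
  proof -
    have "B (os!j) w = B (os!j) v - (\<Sum>k<m. B (os!k) v * B (os!j) (os!k))"
      unfolding w_def by (simp add: form_diff_r form_sum_r form_smult_r)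
    also have "(\<Sum>k<m. B (os!k) v * B (os!j) (os!k)) = (\<Sum>k<m. of_bool (k = j) * B (os!k) v)"
      using on that by (intro sum.cong refl) (auto simp: mult.commute)
    also have "\<dots> = B (os!j) v" using that by (simp add: sum_of_bool_mult')
    finally show ?thesis by simp
  qed
  show ?case
  proof (cases "w = 0")
    case True
    hence "v = (\<Sum>k<m. B (os!k) v *s os!k)" unfolding w_def by simp
    thus ?thesis using gsv True on ex unfolding m_def by simp
  next
    case False
    define \<beta> where "\<beta> = Re (B w w)"
    have \<beta>pos: "\<beta> > 0"
    proof -
      have "\<beta> \<noteq> 0" using def[of w] False B_real[of w] unfolding \<beta>_def by auto
      thus ?thesis using pos[of w] unfolding \<beta>_def by simp
    qed
    define nn where "nn = inverse (sqrt \<beta>)"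
    define o0 where "o0 = complex_of_real nn *s w"
    have gsv': "gs B (v # vs) = o0 # os" using gsv False unfolding o0_def nn_def \<beta>_def by simp
    have Bww: "B w w = complex_of_real \<beta>" using B_real[of w] unfolding \<beta>_def by simp
    have oo: "B o0 o0 = 1"
    proof -
      have "B o0 o0 = complex_of_real (nn * nn * \<beta>)"
        unfolding o0_def by (simp add: form_smult_l form_smult_r Bww)
      also have "nn * nn * \<beta> = 1" unfolding nn_def using \<beta>pos
        by (simp add: field_simps)
      finally show ?thesis by simp
    qed
    have ook: "B o0 (os!k) = 0" "B (os!k) o0 = 0" if "k < m" for k
    proof -
      show "B (os!k) o0 = 0" unfolding o0_def using Bow[OF that] by (simp add: form_smult_r)
      show "B o0 (os!k) = 0" unfolding o0_def using Bow[OF that] herm[of "os!k" w] by (simp add: form_smult_l)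
    qed
    have ortho: "\<forall>i<Suc m. \<forall>j<Suc m. B ((o0 # os) ! i) ((o0 # os) ! j) = of_bool (i = j)"
    proof (intro allI impI)
      fix i j assume "i < Suc m" "j < Suc m"
      thus "B ((o0 # os) ! i) ((o0 # os) ! j) = of_bool (i = j)"
        using oo ook on by (cases i; cases j) auto
    qed
    have Bov: "B o0 v = complex_of_real (sqrt \<beta>)"
    proof -
      have v: "v = w + (\<Sum>k<m. B (os!k) v *s os!k)" unfolding w_def by simp
      have "B o0 v = B o0 w + (\<Sum>k<m. B (os!k) v * B o0 (os!k))"
        by (subst v) (simp add: form_add_r form_sum_r form_smult_r)
      also have "\<dots> = B o0 w" using ook by simp
      also have "\<dots> = complex_of_real (nn * \<beta>)" unfolding o0_def by (simp add: form_smult_l Bww)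
      also have "nn * \<beta> = sqrt \<beta>" unfolding nn_def using \<beta>pos
        by (simp add: field_simps)
      finally show ?thesis .
    qed
    have expv: "v = (\<Sum>k<Suc m. B ((o0 # os)!k) v *s (o0 # os)!k)"
    proof -
      have "(\<Sum>k<Suc m. B ((o0 # os)!k) v *s (o0 # os)!k) = B o0 v *s o0 + (\<Sum>k<m. B (os!k) v *s os!k)"
        by (simp only: sum.lessThan_Suc_shift nth_Cons_0 nth_Cons_Suc)
      also have "B o0 v *s o0 = complex_of_real (sqrt \<beta> * nn) *s w"
        by (subst Bov) (simp add: o0_def vector_smult_assoc)
      also have "sqrt \<beta> * nn = 1" unfolding nn_def using \<beta>pos by simp
      finally show ?thesis unfolding w_def by simp
    qed
    have expu: "u = (\<Sum>k<Suc m. B ((o0 # os)!k) u *s (o0 # os)!k)" if "u \<in> set vs" for u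
    proof -
      have u: "u = (\<Sum>k<m. B (os ! k) u *s os ! k)" using ex that by blast
      have "B o0 u = 0"
      proof -
        have "B o0 u = (\<Sum>k<m. B (os ! k) u * B o0 (os!k))"
          by (subst u) (simp add: form_sum_r form_smult_r)
        thus ?thesis using ook by simp
      qed
      hence "(\<Sum>k<Suc m. B ((o0 # os)!k) u *s (o0 # os)!k) = (\<Sum>k<m. B (os ! k) u *s os ! k)"
        by (simp only: sum.lessThan_Suc_shift nth_Cons_0 nth_Cons_Suc) simp
      thus ?thesis using u by simp
    qed
    show ?thesis unfolding gsv' using ortho expv expu unfolding m_def by auto
  qed
qed

lemma exists_onb:
  "\<exists>os. (\<forall>i<length os. \<forall>j<length os. B (os ! i) (os ! j) = of_bool (i = j)) \<and>
        (\<forall>x. x = (\<Sum>k<length os. B (os ! k) x *s os ! k))"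
proof -
  obtain es :: "'d list" where es: "set es = UNIV" using finite_list[of "UNIV :: 'd set"] by auto
  define os where "os = gs B (map (\<lambda>i. axis i 1) es)"
  have on: "\<forall>i<length os. \<forall>j<length os. B (os ! i) (os ! j) = of_bool (i = j)"
    and ex: "\<forall>i. axis i (1::complex) = (\<Sum>k<length os. B (os ! k) (axis i 1) *s os ! k)"
    using gs_props[of "map (\<lambda>i. axis i 1) es"] es unfolding os_def by auto
  have "x = (\<Sum>k<length os. B (os ! k) x *s os ! k)" for x
  proof -
    have "x = (\<Sum>i\<in>UNIV. x$i *s axis i 1)" by (rule vec_expand)
    also have "\<dots> = (\<Sum>i\<in>UNIV. x$i *s (\<Sum>k<length os. B (os ! k) (axis i 1) *s os ! k))"
      using ex by simp
    also have "\<dots> = (\<Sum>k<length os. (\<Sum>i\<in>UNIV. x$i * B (os ! k) (axis i 1)) *s os ! k)"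
      by (simp add: vector_smult_assoc scaleR_sum_right sum_distrib_left vector_add_ldistrib
          Finite_Cartesian_Product.vec_eq_iff sum_component sum.swap[of _ UNIV] mult_ac)
    also have "\<dots> = (\<Sum>k<length os. B (os ! k) x *s os ! k)"
    proof -
      have "B (os ! k) x = (\<Sum>i\<in>UNIV. x$i * B (os ! k) (axis i 1))" for k
        by (subst vec_expand) (simp add: form_sum_r form_smult_r)
      thus ?thesis by simp
    qed
    finally show ?thesis .
  qed
  thus ?thesis using on by blast
qed

end




lemma sum_cnj_mult_zero:
  assumes "finite A" "(\<Sum>x\<in>A. cnj (f x) * f x) = 0"
  shows "\<forall>x\<in>A. f x = 0"
proof -
  have "(\<Sum>x\<in>A. cnj (f x) * f x) = complex_of_real (\<Sum>x\<in>A. (cmod (f x))\<^sup>2)"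
    by (simp only: of_real_sum complex_norm_square mult.commute)
  hence "complex_of_real (\<Sum>x\<in>A. (cmod (f x))\<^sup>2) = 0" using assms(2) by metis
  hence "(\<Sum>x\<in>A. (cmod (f x))\<^sup>2) = 0" by (simp only: of_real_eq_0_iff)
  hence "\<forall>x\<in>A. (cmod (f x))\<^sup>2 = 0" using assms(1) by (simp add: sum_nonneg_eq_0_iff)
  thus ?thesis by simp
qed

lemma sum2_product:
  "(\<Sum>a\<in>A. \<Sum>b\<in>B. f a b) * (\<Sum>c\<in>C. \<Sum>d\<in>D. g c d) =
   (\<Sum>a\<in>A. \<Sum>b\<in>B. \<Sum>c\<in>C. \<Sum>d\<in>D. f a b * (g c d :: 'a::comm_semiring_1))"
  by (simp add: sum_distrib_left sum_distrib_right) (rule sum_swap22[symmetric])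

lemma positivity_core:
  fixes \<mu> :: "('q::finite) cmat \<Rightarrow> nat \<Rightarrow> nat \<Rightarrow> complex" and G :: "'q cmat set"
    and z :: "nat \<Rightarrow> nat \<Rightarrow> complex" and m :: nat
  assumes finG: "finite G" and cG: "card G > 0"
    and Gmult: "\<And>g h. g \<in> G \<Longrightarrow> h \<in> G \<Longrightarrow> g ** h \<in> G"
    and Gadj: "\<And>g. g \<in> G \<Longrightarrow> cadj g \<in> G"
    and Gunit: "\<And>g. g \<in> G \<Longrightarrow> g ** cadj g = Finite_Cartesian_Product.mat 1"
    and M1: "\<And>g h p q. g \<in> G \<Longrightarrow> h \<in> G \<Longrightarrow> p < m \<Longrightarrow> q < m \<Longrightarrow> \<mu> (g ** h) p q = (\<Sum>r<m. \<mu> g p r * \<mu> h r q)"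
    and M2: "\<And>g p q. g \<in> G \<Longrightarrow> p < m \<Longrightarrow> q < m \<Longrightarrow> \<mu> (cadj g) p q = cnj (\<mu> g q p)"
    and unit: "\<And>g p q. g \<in> G \<Longrightarrow> p < m \<Longrightarrow> q < m \<Longrightarrow> (\<Sum>r<m. cnj (\<mu> g r p) * \<mu> g r q) = of_bool (p = q)"
    and hyp: "\<And>p q. p < m \<Longrightarrow> q < m \<Longrightarrow>
       (\<Sum>g\<in>G. ((\<Sum>a<m. \<mu> g a a) * cnj (\<Sum>a<m. \<mu> g a a)) *
          (\<Sum>p'<m. \<Sum>q'<m. cnj (\<mu> g p' p) * \<mu> g q' q * z p' q')) = 0"
  shows "\<forall>a<m. \<forall>b<m. z a b = 0"
proof -
  let ?I = "{..<m}"
  define chr where "chr g = (\<Sum>a<m. \<mu> g a a)" for g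
  define zg where "zg g p q = (\<Sum>p'<m. \<Sum>q'<m. cnj (\<mu> g p' p) * \<mu> g q' q * z p' q')" for g p q
  define T where "T g = chr g * cnj (chr g) * (\<Sum>p<m. \<Sum>q<m. cnj (z p q) * zg g p q)" for g
  define W where "W x r s = (\<Sum>p'<m. \<Sum>q'<m. \<mu> x r p' * z p' q' * cnj (\<mu> x s q'))" for x r s
  define F where "F x a p b q r s = \<mu> x p a * cnj (\<mu> x q b) * cnj (W x r s)" for x a p b q r s
  have pair: "(\<Sum>a<m. \<Sum>p<m. \<Sum>b<m. \<Sum>q<m. \<Sum>r<m. \<Sum>s<m. cnj (F h a p b q r s) * F k a p b q r s)
      = T (cadj h ** k)" if h: "h \<in> G" and k: "k \<in> G" for h k
  proof -
    define g where "g = cadj h ** k"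
    have mug: "\<mu> g p q = (\<Sum>r<m. cnj (\<mu> h r p) * \<mu> k r q)" if "p < m" "q < m" for p q
      unfolding g_def using M1[OF Gadj[OF h] k that] M2[OF h] that by simp
    have A: "(\<Sum>a<m. \<Sum>p<m. cnj (\<mu> h p a) * \<mu> k p a) = chr g"
      unfolding chr_def by (intro sum.cong refl) (simp add: mug)
    have Bq: "(\<Sum>b<m. \<Sum>q<m. \<mu> h q b * cnj (\<mu> k q b)) = cnj (chr g)"
      unfolding chr_def by (simp add: mug sum_distrib_left mult.commute)
    have C: "(\<Sum>r<m. \<Sum>s<m. W h r s * cnj (W k r s)) = (\<Sum>p<m. \<Sum>q<m. cnj (z p q) * zg g p q)"
    proof -
      define P where "P r s p1 q1 p2 q2 = \<mu> h r p1 * z p1 q1 * cnj (\<mu> h s q1) * cnj (\<mu> k r p2) * cnj (z p2 q2) * \<mu> k s q2"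
        for r s p1 q1 p2 q2
      have L: "(\<Sum>r<m. \<Sum>s<m. W h r s * cnj (W k r s))
        = (\<Sum>r<m. \<Sum>s<m. \<Sum>p1<m. \<Sum>q1<m. \<Sum>p2<m. \<Sum>q2<m. P r s p1 q1 p2 q2)"
      proof (intro sum.cong refl)
        fix r s
        have "W h r s * cnj (W k r s) = (\<Sum>p1<m. \<Sum>q1<m. \<Sum>p2<m. \<Sum>q2<m.
           (\<mu> h r p1 * z p1 q1 * cnj (\<mu> h s q1)) * cnj (\<mu> k r p2 * z p2 q2 * cnj (\<mu> k s q2)))"
          unfolding W_def cnj_sum by (rule sum2_product)
        also have "\<dots> = (\<Sum>p1<m. \<Sum>q1<m. \<Sum>p2<m. \<Sum>q2<m. P r s p1 q1 p2 q2)"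
          unfolding P_def by (simp add: mult_ac)
        finally show "W h r s * cnj (W k r s) = (\<Sum>p1<m. \<Sum>q1<m. \<Sum>p2<m. \<Sum>q2<m. P r s p1 q1 p2 q2)" .
      qed
      have R: "(\<Sum>p<m. \<Sum>q<m. cnj (z p q) * zg g p q)
        = (\<Sum>p2<m. \<Sum>q2<m. \<Sum>p1<m. \<Sum>q1<m. \<Sum>r<m. \<Sum>s<m. P r s p1 q1 p2 q2)"
      proof -
        have "(\<Sum>p<m. \<Sum>q<m. cnj (z p q) * zg g p q) = (\<Sum>p2<m. \<Sum>q2<m. \<Sum>p1<m. \<Sum>q1<m.
             cnj (z p2 q2) * ((\<Sum>r<m. \<mu> h r p1 * cnj (\<mu> k r p2)) * (\<Sum>s<m. cnj (\<mu> h s q1) * \<mu> k s q2) * z p1 q1))"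
        proof (intro sum.cong refl)
          fix p2 q2 assume "p2 \<in> {..<m}" "q2 \<in> {..<m}"
          hence pq: "p2 < m" "q2 < m" by auto
          have "zg g p2 q2 = (\<Sum>p1<m. \<Sum>q1<m. (\<Sum>r<m. \<mu> h r p1 * cnj (\<mu> k r p2)) * (\<Sum>s<m. cnj (\<mu> h s q1) * \<mu> k s q2) * z p1 q1)"
            unfolding zg_def by (intro sum.cong refl) (simp add: mug pq)
          thus "cnj (z p2 q2) * zg g p2 q2 = (\<Sum>p1<m. \<Sum>q1<m.
             cnj (z p2 q2) * ((\<Sum>r<m. \<mu> h r p1 * cnj (\<mu> k r p2)) * (\<Sum>s<m. cnj (\<mu> h s q1) * \<mu> k s q2) * z p1 q1))"
            by (simp add: sum_distrib_left)
        qed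
        also have "\<dots> = (\<Sum>p2<m. \<Sum>q2<m. \<Sum>p1<m. \<Sum>q1<m. \<Sum>r<m. \<Sum>s<m. P r s p1 q1 p2 q2)"
          unfolding P_def by (intro sum.cong refl) (simp add: sum_product sum_distrib_left sum_distrib_right mult_ac, subst sum.swap, simp add: mult_ac)
        finally show ?thesis .
      qed
      have "(\<Sum>r<m. \<Sum>s<m. \<Sum>p1<m. \<Sum>q1<m. \<Sum>p2<m. \<Sum>q2<m. P r s p1 q1 p2 q2)
         = (\<Sum>p1<m. \<Sum>q1<m. \<Sum>r<m. \<Sum>s<m. \<Sum>p2<m. \<Sum>q2<m. P r s p1 q1 p2 q2)"
        by (rule sum_swap22[where F="\<lambda>r s p1 q1. \<Sum>p2<m. \<Sum>q2<m. P r s p1 q1 p2 q2"])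
      also have "\<dots> = (\<Sum>p1<m. \<Sum>q1<m. \<Sum>p2<m. \<Sum>q2<m. \<Sum>r<m. \<Sum>s<m. P r s p1 q1 p2 q2)"
        by (rule sum.cong[OF refl], rule sum.cong[OF refl], rule sum_swap22)
      also have "\<dots> = (\<Sum>p2<m. \<Sum>q2<m. \<Sum>p1<m. \<Sum>q1<m. \<Sum>r<m. \<Sum>s<m. P r s p1 q1 p2 q2)"
        by (rule sum_swap22[where F="\<lambda>p1 q1 p2 q2. \<Sum>r<m. \<Sum>s<m. P r s p1 q1 p2 q2"])
      finally show ?thesis using L R by simp
    qed
    have "(\<Sum>a<m. \<Sum>p<m. \<Sum>b<m. \<Sum>q<m. \<Sum>r<m. \<Sum>s<m. cnj (F h a p b q r s) * F k a p b q r s)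
      = (\<Sum>a<m. \<Sum>p<m. \<Sum>b<m. \<Sum>q<m. \<Sum>r<m. \<Sum>s<m.
           (cnj (\<mu> h p a) * \<mu> k p a) * ((\<mu> h q b * cnj (\<mu> k q b)) * (W h r s * cnj (W k r s))))"
      unfolding F_def by (intro sum.cong refl) (simp add: mult_ac)
    also have "\<dots> = (\<Sum>a<m. \<Sum>p<m. cnj (\<mu> h p a) * \<mu> k p a) *
        ((\<Sum>b<m. \<Sum>q<m. \<mu> h q b * cnj (\<mu> k q b)) * (\<Sum>r<m. \<Sum>s<m. W h r s * cnj (W k r s)))"
      unfolding sum2_product[where f="\<lambda>b q. \<mu> h q b * cnj (\<mu> k q b)"] sum2_product[where f="\<lambda>a p. cnj (\<mu> h p a) * \<mu> k p a"]
      by (intro sum.cong refl) (simp add: sum_distrib_left)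
    also have "\<dots> = T g" unfolding A Bq C T_def by (simp add: mult_ac)
    finally show ?thesis unfolding g_def .
  qed
  have cadj_cadj: "cadj (cadj x) = x" for x :: "'q cmat" unfolding cadj_def by (simp add: Finite_Cartesian_Product.vec_eq_iff)
  have reidx: "(\<Sum>k\<in>G. T (cadj h ** k)) = (\<Sum>g\<in>G. T g)" if h: "h \<in> G" for h
  proof -
    have hh: "cadj h ** h = Finite_Cartesian_Product.mat 1" using Gunit[OF Gadj[OF h]] cadj_cadj by simp
    show ?thesis
    proof (rule sum.reindex_bij_witness[where i="\<lambda>g. h ** g" and j="\<lambda>k. cadj h ** k"])
      fix k assume "k \<in> G"
      show "h ** (cadj h ** k) = k" using Gunit[OF h] by (simp add: matrix_mul_assoc)
      show "cadj h ** k \<in> G" using Gmult Gadj h \<open>k \<in> G\<close> by blast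
      show "T (cadj h ** k) = T (cadj h ** k)" ..
    next
      fix g assume "g \<in> G"
      show "cadj h ** (h ** g) = g" using hh by (simp add: matrix_mul_assoc)
      show "h ** g \<in> G" using Gmult h \<open>g \<in> G\<close> by blast
    qed
  qed
  define I6 where "I6 = ?I \<times> ?I \<times> ?I \<times> ?I \<times> ?I \<times> ?I"
  define F' where "F' h c = (case c of (a,p,b,q,r,s) \<Rightarrow> F h a p b q r s)" for h c
  define S where "S c = (\<Sum>h\<in>G. F' h c)" for c
  have nest6: "(\<Sum>c\<in>I6. Q c) = (\<Sum>a<m. \<Sum>p<m. \<Sum>b<m. \<Sum>q<m. \<Sum>r<m. \<Sum>s<m. Q (a,p,b,q,r,s))"
    for Q :: "nat \<times> nat \<times> nat \<times> nat \<times> nat \<times> nat \<Rightarrow> complex"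
    unfolding I6_def by (simp only: sum.cartesian_product')
  have "(\<Sum>c\<in>I6. cnj (S c) * S c) = (\<Sum>c\<in>I6. \<Sum>h\<in>G. \<Sum>k\<in>G. cnj (F' h c) * F' k c)"
    unfolding S_def by (simp add: sum_product)
  also have "\<dots> = (\<Sum>h\<in>G. \<Sum>k\<in>G. \<Sum>c\<in>I6. cnj (F' h c) * F' k c)"
    by (rule sum_swap3)
  also have "\<dots> = (\<Sum>h\<in>G. \<Sum>k\<in>G. T (cadj h ** k))"
    by (intro sum.cong refl) (simp add: nest6 F'_def pair)
  also have "\<dots> = (\<Sum>h\<in>G. \<Sum>g\<in>G. T g)" by (intro sum.cong refl reidx)
  also have "\<dots> = of_nat (card G) * (\<Sum>g\<in>G. T g)" by simp
  also have "(\<Sum>g\<in>G. T g) = 0"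
  proof -
    have "(\<Sum>g\<in>G. T g) = (\<Sum>p<m. \<Sum>q<m. cnj (z p q) *
       (\<Sum>g\<in>G. (chr g * cnj (chr g)) * zg g p q))"
      unfolding T_def by (simp add: sum_distrib_left sum_distrib_right mult_ac sum_swap3[where A=G])
    also have "\<dots> = 0" using hyp unfolding chr_def zg_def by simp
    finally show ?thesis .
  qed
  finally have "(\<Sum>c\<in>I6. cnj (S c) * S c) = 0" by simp
  hence S0: "\<forall>c\<in>I6. S c = 0" by (rule sum_cnj_mult_zero[rotated]) (simp add: I6_def)
  have contr: "(\<Sum>p<m. \<Sum>q<m. F h a p b q p q) = cnj (z a b)" if h: "h \<in> G" and ab: "a < m" "b < m" for h a b
  proof -
    define Q where "Q p q p' q' = cnj (z p' q') * (\<mu> h p a * cnj (\<mu> h p p')) * (cnj (\<mu> h q b) * \<mu> h q q')" for p q p' q'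
    have "(\<Sum>p<m. \<Sum>q<m. F h a p b q p q) = (\<Sum>p<m. \<Sum>q<m. \<Sum>p'<m. \<Sum>q'<m. Q p q p' q')"
    proof (intro sum.cong refl)
      fix p q
      show "F h a p b q p q = (\<Sum>p'<m. \<Sum>q'<m. Q p q p' q')"
        unfolding F_def W_def Q_def by (simp add: sum_distrib_left mult_ac)
    qed
    also have "\<dots> = (\<Sum>p'<m. \<Sum>q'<m. \<Sum>p<m. \<Sum>q<m. Q p q p' q')" by (rule sum_swap22)
    also have "\<dots> = (\<Sum>p'<m. \<Sum>q'<m. cnj (z p' q') * (\<Sum>p<m. \<mu> h p a * cnj (\<mu> h p p')) * (\<Sum>q<m. cnj (\<mu> h q b) * \<mu> h q q'))"
      unfolding Q_def by (intro sum.cong refl) (simp add: sum_product sum_distrib_left mult_ac)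
    also have "\<dots> = (\<Sum>p'<m. \<Sum>q'<m. of_bool (p' = a) * (of_bool (b = q') * cnj (z p' q')))"
    proof (intro sum.cong refl)
      fix p' q' assume "p' \<in> {..<m}" "q' \<in> {..<m}"
      hence pq: "p' < m" "q' < m" by auto
      have 1: "(\<Sum>p<m. \<mu> h p a * cnj (\<mu> h p p')) = of_bool (p' = a)"
        using unit[OF h pq(1) ab(1)] by (simp add: mult.commute)
      have 2: "(\<Sum>q<m. cnj (\<mu> h q b) * \<mu> h q q') = of_bool (b = q')"
        using unit[OF h ab(2) pq(2)] by simp
      show "cnj (z p' q') * (\<Sum>p<m. \<mu> h p a * cnj (\<mu> h p p')) * (\<Sum>q<m. cnj (\<mu> h q b) * \<mu> h q q')
         = of_bool (p' = a) * (of_bool (b = q') * cnj (z p' q'))" unfolding 1 2 by (simp only: mult_ac)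
    qed
    also have "\<dots> = (\<Sum>p'<m. of_bool (p' = a) * (\<Sum>q'<m. of_bool (b = q') * cnj (z p' q')))"
      by (simp only: sum_distrib_left)
    also have "\<dots> = (\<Sum>p'<m. of_bool (p' = a) * cnj (z p' b))"
      using ab by (simp add: sum_of_bool_mult)
    also have "\<dots> = cnj (z a b)"
      using ab by (simp add: sum_of_bool_mult')
    finally show ?thesis .
  qed
  show ?thesis
  proof (intro allI impI)
    fix a b assume ab: "a < m" "b < m"
    have "of_nat (card G) * cnj (z a b) = (\<Sum>h\<in>G. \<Sum>p<m. \<Sum>q<m. F h a p b q p q)"
      using contr ab by simp
    also have "\<dots> = (\<Sum>p<m. \<Sum>q<m. S (a,p,b,q,p,q))"
      unfolding S_def F'_def by (simp add: sum_swap3[where A=G])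
    also have "\<dots> = 0" using S0 ab unfolding I6_def by simp
    finally show "z a b = 0" using cG by simp
  qed
qed



lemma mv_smult: "(M::complex^'d^'e) *v (c *s x) = c *s (M *v x)"
  by (simp add: Finite_Cartesian_Product.vec_eq_iff matrix_vector_mult_def sum_distrib_left mult_ac)

lemma mv_sum: "finite K \<Longrightarrow> (M::complex^'d^'e) *v (\<Sum>k\<in>K. f k) = (\<Sum>k\<in>K. M *v f k)"
  by (induction K rule: finite_induct) (auto simp: matrix_vector_right_distrib)

lemma form_transform:
  "form M (P *v a) (P *v b) = form (cadj P ** M ** P) a b"
proof -
  have "form M (P *v a) (P *v b) = (\<Sum>i\<in>UNIV. \<Sum>j\<in>UNIV. \<Sum>k\<in>UNIV. \<Sum>l\<in>UNIV.
      cnj (a$k) * (cnj (P$i$k) * M$i$j * P$j$l) * b$l)"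
    unfolding form_def matrix_vector_mult_def
    by (simp add: sum_distrib_left sum_distrib_right mult_ac)
  also have "\<dots> = (\<Sum>k\<in>UNIV. \<Sum>l\<in>UNIV. \<Sum>i\<in>UNIV. \<Sum>j\<in>UNIV.
      cnj (a$k) * (cnj (P$i$k) * M$i$j * P$j$l) * b$l)"
    by (rule sum_swap22)
  also have "\<dots> = (\<Sum>k\<in>UNIV. \<Sum>l\<in>UNIV. \<Sum>j\<in>UNIV. \<Sum>i\<in>UNIV.
      cnj (a$k) * (cnj (P$i$k) * M$i$j * P$j$l) * b$l)"
    by (rule sum.cong[OF refl], rule sum.cong[OF refl], rule sum.swap)
  also have "\<dots> = form (cadj P ** M ** P) a b"
    unfolding form_def matrix_matrix_mult_def cadj_def
    by (simp add: sum_distrib_left sum_distrib_right mult_ac)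
  finally show ?thesis .
qed

lemma form_sum_mat: "finite H \<Longrightarrow> form (\<Sum>h\<in>H. M h) a b = (\<Sum>h\<in>H. form (M h) a b)"
  unfolding form_def by (simp add: sum_component sum_distrib_left sum_distrib_right sum_swap3[where A=H])

lemma form_lincomb: "form (\<chi> i j. c * M$i$j - N$i$j) a b = c * form M a b - form N a b"
  unfolding form_def by (simp add: algebra_simps sum_subtractf sum_distrib_left)

lemma inner_lin:
  "inner_n n (\<lambda>xs. \<Sum>i\<in>UNIV. a$i * f i xs) (\<lambda>xs. \<Sum>j\<in>UNIV. b$j * h j xs)
   = form (\<chi> i j. inner_n n (f i) (h j)) a b"
proof -
  have "inner_n n (\<lambda>xs. \<Sum>i\<in>UNIV. a$i * f i xs) (\<lambda>xs. \<Sum>j\<in>UNIV. b$j * h j xs)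
    = (\<Sum>xs\<in>tuples n. \<Sum>i\<in>UNIV. \<Sum>j\<in>UNIV. cnj (a$i) * (cnj (f i xs) * h j xs) * b$j)"
    unfolding inner_n_def by (simp add: sum_distrib_left sum_distrib_right mult_ac)
  also have "\<dots> = (\<Sum>i\<in>UNIV. \<Sum>j\<in>UNIV. \<Sum>xs\<in>tuples n. cnj (a$i) * (cnj (f i xs) * h j xs) * b$j)"
    by (rule sum_swap3)
  also have "\<dots> = form (\<chi> i j. inner_n n (f i) (h j)) a b"
    unfolding form_def inner_n_def by (simp add: sum_distrib_left sum_distrib_right mult_ac)
  finally show ?thesis .
qed

lemma apply_op_lin:
  "apply_op n E (\<lambda>xs. \<Sum>j\<in>UNIV. b$j * h j xs) = (\<lambda>xs. \<Sum>j\<in>UNIV. b$j * apply_op n E (h j) xs)"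
proof
  fix xs
  show "apply_op n E (\<lambda>xs. \<Sum>j\<in>UNIV. b$j * h j xs) xs = (\<Sum>j\<in>UNIV. b$j * apply_op n E (h j) xs)"
    unfolding apply_op_def by (simp add: sum_distrib_left mult_ac sum.swap[of _ "tuples n"])
qed

lemma unitary_inner:
  fixes g :: "('q::finite) cmat"
  assumes unit: "cadj g ** g = Finite_Cartesian_Product.mat 1"
  shows "inner_n n (apply_op n (tensor_pow n g) \<psi>) (apply_op n (tensor_pow n g) \<phi>) = inner_n n \<psi> \<phi>"
proof -
  define Id where "Id = (\<lambda>xs ys::'q list. (of_bool (xs = ys) :: complex))"
  have 1: "apply_op n Id (apply_op n (tensor_pow n g) \<phi>) = apply_op n (tensor_pow n g) \<phi>"
  proof
    fix xs
    show "apply_op n Id (apply_op n (tensor_pow n g) \<phi>) xs = apply_op n (tensor_pow n g) \<phi> xs"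
    proof (cases "length xs = n")
      case True
      have "apply_op n Id v xs = (\<Sum>ys\<in>tuples n. of_bool (xs = ys) * v ys)" for v
        unfolding apply_op_def Id_def using True by simp
      hence "apply_op n Id (apply_op n (tensor_pow n g) \<phi>) xs =
          (\<Sum>ys\<in>tuples n. of_bool (xs = ys) * apply_op n (tensor_pow n g) \<phi> ys)" .
      also have "\<dots> = apply_op n (tensor_pow n g) \<phi> xs"
        by (rule sum_of_bool_mult) (use True in auto)
      finally show ?thesis .
    next
      case False
      thus ?thesis unfolding apply_op_def by simp
    qed
  qed
  have 2: "Nker n Id g ys zs = of_bool (ys = zs)" if "length ys = n" "length zs = n" for ys zs
  proof -
    have "Nker n Id g ys zs = (\<Sum>xs\<in>tuples n. cnj (tensor_pow n g xs ys) * tensor_pow n g xs zs)"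
      unfolding Nker_def Id_def
      by (intro sum.cong refl) (simp add: mult.assoc, subst sum_distrib_left[symmetric], subst sum_of_bool_mult, auto)
    also have "\<dots> = (\<Sum>xs\<in>tuples n. \<Prod>k<n. cnj (g $ (xs!k) $ (ys!k)) * g $ (xs!k) $ (zs!k))"
      unfolding tensor_pow_def by (simp add: prod.distrib)
    also have "\<dots> = (\<Prod>k<n. \<Sum>x\<in>UNIV. cnj (g $ x $ (ys!k)) * g $ x $ (zs!k))"
      by (rule sum_tuples_prod)
    also have "\<dots> = (\<Prod>k<n. of_bool (ys!k = zs!k))" by (simp add: unitary_col[OF unit])
    also have "\<dots> = of_bool (\<forall>k\<in>{..<n}. ys!k = zs!k)" by (simp add: prod_of_bool_eq)
    also have "(\<forall>k\<in>{..<n}. ys!k = zs!k) = (ys = zs)" using that by (auto simp: list_eq_iff_nth_eq)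
    finally show ?thesis .
  qed
  have "inner_n n (apply_op n (tensor_pow n g) \<psi>) (apply_op n (tensor_pow n g) \<phi>)
     = inner_n n (apply_op n (tensor_pow n g) \<psi>) (apply_op n Id (apply_op n (tensor_pow n g) \<phi>))"
    using 1 by simp
  also have "\<dots> = (\<Sum>ys\<in>tuples n. \<Sum>zs\<in>tuples n. cnj (\<psi> ys) * \<phi> zs * of_bool (ys = zs))"
    unfolding inner_twirl using 2 by (intro sum.cong refl) auto
  also have "\<dots> = inner_n n \<psi> \<phi>"
    unfolding inner_n_def by (intro sum.cong refl) (simp add: sum_of_bool_mult mult.commute)
  finally show ?thesis .
qed




locale code_setup =
  fixes G :: "('q::finite) cmat set" and \<rho> :: "'q cmat \<Rightarrow> complex^'d::finite^'d" and n :: nat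
    and C :: "('q list \<Rightarrow> complex) set" and T :: "complex^'d \<Rightarrow> ('q list \<Rightarrow> complex)"
  assumes fus: "finite_unitary_subgroup G"
    and irr: "irreducible_rep G \<rho>"
    and Csub: "C \<subseteq> tensor_space n"
    and iso: "intertwining_iso n G \<rho> C T"
begin

lemma finG: "finite G" using fus unfolding finite_unitary_subgroup_def by simp
lemma oneG: "Finite_Cartesian_Product.mat 1 \<in> G" using fus unfolding finite_unitary_subgroup_def by simp
lemma Gmult: "g \<in> G \<Longrightarrow> h \<in> G \<Longrightarrow> g ** h \<in> G" using fus unfolding finite_unitary_subgroup_def by simp
lemma Gadj: "g \<in> G \<Longrightarrow> cadj g \<in> G" using fus unfolding finite_unitary_subgroup_def by simp
lemma GU: "G \<subseteq> unitary_group" using fus unfolding finite_unitary_subgroup_def by simp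
lemma Gunit1: "g \<in> G \<Longrightarrow> g ** cadj g = Finite_Cartesian_Product.mat 1" using GU unfolding unitary_group_def by auto
lemma Gunit2: "g \<in> G \<Longrightarrow> cadj g ** g = Finite_Cartesian_Product.mat 1" using GU unfolding unitary_group_def by auto
lemma cG: "card G > 0" using finG oneG card_gt_0_iff by blast
lemma rhom: "g \<in> G \<Longrightarrow> h \<in> G \<Longrightarrow> \<rho> (g ** h) = \<rho> g ** \<rho> h"
  using irr unfolding irreducible_rep_def representation_def by simp
lemma rone: "\<rho> (Finite_Cartesian_Product.mat 1) = Finite_Cartesian_Product.mat 1"
  using irr unfolding irreducible_rep_def representation_def by simp
lemma rinv1: "g \<in> G \<Longrightarrow> \<rho> g *v (\<rho> (cadj g) *v x) = x"
proof -
  assume g: "g \<in> G"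
  have "\<rho> g *v (\<rho> (cadj g) *v x) = (\<rho> g ** \<rho> (cadj g)) *v x" by (simp add: matrix_vector_mul_assoc)
  also have "\<dots> = \<rho> (g ** cadj g) *v x" using rhom[OF g Gadj[OF g]] by simp
  also have "\<dots> = x" using Gunit1[OF g] rone by simp
  finally show ?thesis .
qed
lemma rinv2: "g \<in> G \<Longrightarrow> \<rho> (cadj g) *v (\<rho> g *v x) = x"
proof -
  assume g: "g \<in> G"
  have "\<rho> (cadj g) *v (\<rho> g *v x) = (\<rho> (cadj g) ** \<rho> g) *v x" by (simp add: matrix_vector_mul_assoc)
  also have "\<dots> = \<rho> (cadj g ** g) *v x" using rhom[OF Gadj[OF g] g] by simp
  also have "\<dots> = x" using Gunit2[OF g] rone by simp
  finally show ?thesis .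
qed
lemma rmul: "g \<in> G \<Longrightarrow> h \<in> G \<Longrightarrow> \<rho> (g ** h) *v x = \<rho> g *v (\<rho> h *v x)"
  using rhom by (simp add: matrix_vector_mul_assoc)

lemma Tadd: "T (u + v) = (\<lambda>x. T u x + T v x)" using iso unfolding intertwining_iso_def by simp
lemma Tsm: "T (c *s v) = (\<lambda>x. c * T v x)" using iso unfolding intertwining_iso_def by simp
lemma Tbij: "bij_betw T UNIV C" using iso unfolding intertwining_iso_def by simp
lemma Tint: "g \<in> G \<Longrightarrow> apply_op n (tensor_pow n g) (T v) = T (\<rho> g *v v)"
  using iso unfolding intertwining_iso_def by simp
lemma T0: "T 0 = (\<lambda>_. 0)" using Tsm[of 0 0] by simp
lemma Tsum: "finite K \<Longrightarrow> T (\<Sum>k\<in>K. f k) = (\<lambda>x. \<Sum>k\<in>K. T (f k) x)"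
  by (induction K rule: finite_induct) (auto simp: T0 Tadd)

definition tau where "tau i = T (axis i 1)"
lemma T_expand: "T a = (\<lambda>xs. \<Sum>i\<in>UNIV. a$i * tau i xs)"
proof -
  have "T a = T (\<Sum>i\<in>UNIV. a$i *s axis i 1)" by (subst vec_expand) simp
  also have "\<dots> = (\<lambda>xs. \<Sum>i\<in>UNIV. a$i * tau i xs)" by (simp add: Tsum Tsm tau_def)
  finally show ?thesis .
qed

definition Gm where "Gm = (\<chi> i j. inner_n n (tau i) (tau j))"
lemma B_eq: "inner_n n (T a) (T b) = form Gm a b"
proof -
  have "inner_n n (T a) (T b) = inner_n n (\<lambda>xs. \<Sum>i\<in>UNIV. a$i * tau i xs) (\<lambda>xs. \<Sum>i\<in>UNIV. b$i * tau i xs)"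
    by (simp only: T_expand[of a] T_expand[of b])
  also have "\<dots> = form Gm a b" unfolding Gm_def by (rule inner_lin)
  finally show ?thesis .
qed

lemma inner_herm: "inner_n n \<phi> \<psi> = cnj (inner_n n \<psi> \<phi>)"
  unfolding inner_n_def by (simp add: mult.commute)

lemma inner_pos: "Re (inner_n n \<psi> \<psi>) \<ge> 0"
proof -
  have "inner_n n \<psi> \<psi> = complex_of_real (\<Sum>xs\<in>tuples n. (cmod (\<psi> xs))\<^sup>2)"
    unfolding inner_n_def by (simp only: of_real_sum complex_norm_square mult.commute)
  hence "Re (inner_n n \<psi> \<psi>) = (\<Sum>xs\<in>tuples n. (cmod (\<psi> xs))\<^sup>2)" by simp
  thus ?thesis by (simp add: sum_nonneg)
qed

lemma Tinj: "T a = T b \<Longrightarrow> a = b" using Tbij unfolding bij_betw_def inj_on_def by blast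
lemma TC: "T a \<in> C" using Tbij unfolding bij_betw_def by blast

sublocale herm Gm
proof
  fix a b :: "complex^'d"
  show "form Gm b a = cnj (form Gm a b)" unfolding B_eq[symmetric] by (rule inner_herm)
  show "0 \<le> Re (form Gm a a)" unfolding B_eq[symmetric] by (rule inner_pos)
  assume "form Gm a a = 0"
  hence "inner_n n (T a) (T a) = 0" by (simp add: B_eq)
  hence z: "\<forall>xs\<in>tuples n. T a xs = 0" unfolding inner_n_def by (rule sum_cnj_mult_zero[rotated]) simp
  have "T a = (\<lambda>_. 0)"
  proof
    fix xs show "T a xs = 0"
      using z TC[of a] Csub unfolding tensor_space_def by (cases "length xs = n") auto
  qed
  thus "a = 0" using T0 Tinj by metis
qed

lemma B_inv: "g \<in> G \<Longrightarrow> form Gm (\<rho> g *v a) (\<rho> g *v b) = form Gm a b"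
  unfolding B_eq[symmetric] Tint[symmetric] using GU by (auto intro: unitary_inner unitary_cadj_mult)

definition onb where "onb = (SOME os. (\<forall>i<length os. \<forall>j<length os. form Gm (os ! i) (os ! j) = of_bool (i = j)) \<and>
        (\<forall>x. x = (\<Sum>k<length os. form Gm (os ! k) x *s os ! k)))"
definition "m = length onb"
definition "ob k = onb ! k"
lemma onb_P: "(\<forall>i<length onb. \<forall>j<length onb. form Gm (onb ! i) (onb ! j) = of_bool (i = j)) \<and>
        (\<forall>x. x = (\<Sum>k<length onb. form Gm (onb ! k) x *s onb ! k))"
  unfolding onb_def by (rule someI_ex[OF exists_onb])
lemma parseval: "x = (\<Sum>k<m. form Gm (ob k) x *s ob k)"
  unfolding m_def ob_def using conjunct2[OF onb_P] by (rule spec)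
lemma onb_orth: "i < m \<Longrightarrow> j < m \<Longrightarrow> form Gm (ob i) (ob j) = of_bool (i = j)"
  unfolding m_def ob_def using conjunct1[OF onb_P] by blast

lemma form_expand: "form M x y = (\<Sum>p<m. \<Sum>q<m. cnj (form Gm (ob p) x) * form Gm (ob q) y * form M (ob p) (ob q))"
proof -
  have "form M x y = form M (\<Sum>p<m. form Gm (ob p) x *s ob p) (\<Sum>q<m. form Gm (ob q) y *s ob q)"
    by (rule arg_cong2[where f="form M"]; rule parseval)
  also have "\<dots> = (\<Sum>p<m. \<Sum>q<m. cnj (form Gm (ob p) x) * form Gm (ob q) y * form M (ob p) (ob q))"
    by (simp add: form_sum_l form_sum_r form_smult_l form_smult_r sum_distrib_left mult_ac) (rule sum.swap)
  finally show ?thesis .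
qed

definition mu where "mu g p q = form Gm (ob p) (\<rho> g *v ob q)"

lemma rho_ob: "\<rho> g *v ob q = (\<Sum>r<m. mu g r q *s ob r)"
  unfolding mu_def by (rule parseval)

lemma M1: "g \<in> G \<Longrightarrow> h \<in> G \<Longrightarrow> mu (g ** h) p q = (\<Sum>r<m. mu g p r * mu h r q)"
proof -
  assume g: "g \<in> G" and h: "h \<in> G"
  have e: "\<rho> h *v ob q = (\<Sum>r<m. mu h r q *s ob r)" by (rule rho_ob)
  have "mu (g ** h) p q = form Gm (ob p) (\<rho> g *v (\<rho> h *v ob q))"
    unfolding mu_def rmul[OF g h] ..
  also have "\<dots> = form Gm (ob p) (\<rho> g *v (\<Sum>r<m. mu h r q *s ob r))"
    by (simp only: e)
  also have "\<dots> = (\<Sum>r<m. mu h r q * mu g p r)"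
    by (simp add: mv_sum mv_smult form_sum_r form_smult_r mu_def)
  finally show ?thesis by (simp add: mult.commute)
qed

lemma M2: "g \<in> G \<Longrightarrow> mu (cadj g) p q = cnj (mu g q p)"
proof -
  assume g: "g \<in> G"
  have "mu (cadj g) p q = form Gm (\<rho> g *v ob p) (\<rho> g *v (\<rho> (cadj g) *v ob q))"
    unfolding mu_def B_inv[OF g] ..
  also have "\<dots> = form Gm (\<rho> g *v ob p) (ob q)" using rinv1[OF g] by simp
  also have "\<dots> = cnj (mu g q p)" unfolding mu_def by (rule herm)
  finally show ?thesis .
qed

lemma M3: "p < m \<Longrightarrow> q < m \<Longrightarrow> mu (Finite_Cartesian_Product.mat 1) p q = of_bool (p = q)"
  unfolding mu_def using rone onb_orth by simp

lemma unit: "g \<in> G \<Longrightarrow> p < m \<Longrightarrow> q < m \<Longrightarrow> (\<Sum>r<m. cnj (mu g r p) * mu g r q) = of_bool (p = q)"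
proof -
  assume g: "g \<in> G" and pq: "p < m" "q < m"
  have "(\<Sum>r<m. cnj (mu g r p) * mu g r q) = (\<Sum>r<m. mu (cadj g) p r * mu g r q)"
    using M2[OF g] by simp
  also have "\<dots> = mu (cadj g ** g) p q" using M1[OF Gadj[OF g] g] by simp
  also have "\<dots> = of_bool (p = q)" using Gunit2[OF g] M3[OF pq] by simp
  finally show ?thesis .
qed

lemma trace_formula: "trace M = (\<Sum>p<m. form Gm (ob p) (M *v ob p))"
proof -
  have "trace M = (\<Sum>i\<in>UNIV. (M *v axis i 1) $ i)"
  proof (unfold Determinants.trace_def, intro sum.cong refl)
    fix i
    have "(M *v axis i 1) $ i = (\<Sum>j\<in>UNIV. M$i$j * (axis i 1)$j)" by (simp add: matrix_vector_mult_def)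
    also have "\<dots> = (\<Sum>j\<in>UNIV. if j = i then M$i$j else 0)" by (intro sum.cong refl) (simp add: axis_def)
    finally have "(M *v axis i 1) $ i = (\<Sum>j\<in>UNIV. if j = i then M$i$j else 0)" .
    thus "M $ i $ i = (M *v axis i 1) $ i" by simp
  qed
  also have "\<dots> = (\<Sum>i\<in>UNIV. \<Sum>p<m. form Gm (ob p) (axis i 1) * (M *v ob p) $ i)"
  proof (intro sum.cong refl)
    fix i
    have e: "axis i (1::complex) = (\<Sum>p<m. form Gm (ob p) (axis i 1) *s ob p)" by (rule parseval)
    have "(M *v axis i 1) $ i = (M *v (\<Sum>p<m. form Gm (ob p) (axis i 1) *s ob p)) $ i"
      by (simp only: e[symmetric])
    thus "(M *v axis i 1) $ i = (\<Sum>p<m. form Gm (ob p) (axis i 1) * (M *v ob p) $ i)"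
      by (simp add: mv_sum mv_smult sum_component)
  qed
  also have "\<dots> = (\<Sum>p<m. \<Sum>i\<in>UNIV. (M *v ob p) $ i * form Gm (ob p) (axis i 1))"
    by (subst sum.swap) (simp add: mult.commute)
  also have "\<dots> = (\<Sum>p<m. form Gm (ob p) (M *v ob p))"
  proof (intro sum.cong refl)
    fix p
    have e: "M *v ob p = (\<Sum>i\<in>UNIV. (M *v ob p)$i *s axis i 1)" by (rule vec_expand)
    have "form Gm (ob p) (M *v ob p) = form Gm (ob p) (\<Sum>i\<in>UNIV. (M *v ob p)$i *s axis i 1)"
      by (simp only: e[symmetric])
    thus "(\<Sum>i\<in>UNIV. (M *v ob p) $ i * form Gm (ob p) (axis i 1)) = form Gm (ob p) (M *v ob p)"
      by (simp add: form_sum_r form_smult_r)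
  qed
  finally show ?thesis .
qed

end




context code_setup
begin

lemma form_rho_ob:
  "form Zm (\<rho> g *v ob p) (\<rho> g *v ob q) = (\<Sum>p'<m. \<Sum>q'<m. cnj (mu g p' p) * mu g q' q * form Zm (ob p') (ob q'))"
  unfolding rho_ob[of g p] rho_ob[of g q]
  by (simp add: form_sum_l form_sum_r form_smult_l form_smult_r sum_distrib_left mult_ac) (rule sum.swap)

lemma chr_mu: "character \<rho> g = (\<Sum>a<m. mu g a a)"
  unfolding character_def trace_formula mu_def ..

lemma form_zero:
  assumes H: "\<And>a b. (\<Sum>g\<in>G. complex_of_real ((cmod (character \<rho> g))\<^sup>2) * form Zm (\<rho> g *v a) (\<rho> g *v b)) = 0"
  shows "form Zm a b = 0"
proof -
  have core: "\<forall>a<m. \<forall>b<m. form Zm (ob a) (ob b) = 0"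
  proof (rule positivity_core[where \<mu>=mu and G=G and z="\<lambda>p q. form Zm (ob p) (ob q)"])
    show "finite G" by (rule finG)
    show "card G > 0" by (rule cG)
    show "\<And>g h. g \<in> G \<Longrightarrow> h \<in> G \<Longrightarrow> g ** h \<in> G" by (rule Gmult)
    show "\<And>g. g \<in> G \<Longrightarrow> cadj g \<in> G" by (rule Gadj)
    show "\<And>g. g \<in> G \<Longrightarrow> g ** cadj g = Finite_Cartesian_Product.mat 1" by (rule Gunit1)
    show "\<And>g h p q. g \<in> G \<Longrightarrow> h \<in> G \<Longrightarrow> p < m \<Longrightarrow> q < m \<Longrightarrow> mu (g ** h) p q = (\<Sum>r<m. mu g p r * mu h r q)"
      by (rule M1)
    show "\<And>g p q. g \<in> G \<Longrightarrow> p < m \<Longrightarrow> q < m \<Longrightarrow> mu (cadj g) p q = cnj (mu g q p)" by (rule M2)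
    show "\<And>g p q. g \<in> G \<Longrightarrow> p < m \<Longrightarrow> q < m \<Longrightarrow> (\<Sum>r<m. cnj (mu g r p) * mu g r q) = of_bool (p = q)"
      by (rule unit)
    fix p q assume "p < m" "q < m"
    have "(\<Sum>g\<in>G. complex_of_real ((cmod (character \<rho> g))\<^sup>2) * form Zm (\<rho> g *v ob p) (\<rho> g *v ob q)) = 0"
      by (rule H)
    thus "(\<Sum>g\<in>G. ((\<Sum>a<m. mu g a a) * cnj (\<Sum>a<m. mu g a a)) *
          (\<Sum>p'<m. \<Sum>q'<m. cnj (mu g p' p) * mu g q' q * form Zm (ob p') (ob q'))) = 0"
      by (simp only: complex_norm_square chr_mu form_rho_ob)
  qed
  show ?thesis
    using core by (subst form_expand) simp
qed

lemma sum_left_mult: "g \<in> G \<Longrightarrow> (\<Sum>h\<in>G. f (g ** h)) = (\<Sum>h\<in>G. f h)"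
  by (rule sum.reindex_bij_witness[where i="\<lambda>h. cadj g ** h" and j="\<lambda>h. g ** h"])
     (auto simp: matrix_mul_assoc Gunit1 Gunit2 Gmult Gadj)

lemma sum_right_mult: "g \<in> G \<Longrightarrow> (\<Sum>h\<in>G. f (h ** g)) = (\<Sum>h\<in>G. f h)"
  by (rule sum.reindex_bij_witness[where i="\<lambda>h. h ** cadj g" and j="\<lambda>h. h ** g"])
     (auto simp: matrix_mul_assoc[symmetric] Gunit1 Gunit2 Gmult Gadj)

lemma schur:
  assumes inv: "\<And>g a b. g \<in> G \<Longrightarrow> form Km (\<rho> g *v a) (\<rho> g *v b) = form Km a b"
  shows "\<exists>c. \<forall>a b. form Km a b = c * form Gm a b"
proof -
  define X where "X b = (\<Sum>k<m. form Km (ob k) b *s ob k)" for b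
  have KX: "form Km a b = form Gm a (X b)" for a b
  proof -
    have "form Km a b = form Km (\<Sum>k<m. form Gm (ob k) a *s ob k) b"
      by (rule arg_cong2[where f="form Km"]; rule parseval[symmetric, THEN sym] refl)
    also have "\<dots> = (\<Sum>k<m. cnj (form Gm (ob k) a) * form Km (ob k) b)"
      by (simp add: form_sum_l form_smult_l)
    also have "\<dots> = form Gm a (X b)"
    proof -
      have hk: "form Gm a (ob k) = cnj (form Gm (ob k) a)" for k by (rule herm)
      show ?thesis unfolding X_def by (simp add: form_sum_r form_smult_r hk mult.commute)
    qed
    finally show ?thesis .
  qed
  define Xm where "Xm = (\<chi> i j. (X (axis j 1)) $ i)"
  have XmX: "Xm *v b = X b" for b
  proof -
    have lin: "form Km (ob k) b = (\<Sum>j\<in>UNIV. b$j * form Km (ob k) (axis j 1))" for k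
    proof -
      have e: "b = (\<Sum>j\<in>UNIV. b$j *s axis j 1)" by (rule vec_expand)
      have "form Km (ob k) b = form Km (ob k) (\<Sum>j\<in>UNIV. b$j *s axis j 1)" by (simp only: e[symmetric])
      thus ?thesis by (simp add: form_sum_r form_smult_r)
    qed
    show ?thesis unfolding Finite_Cartesian_Product.vec_eq_iff
    proof
      fix i
      have "(Xm *v b)$i = (\<Sum>j\<in>UNIV. (X (axis j 1))$i * b$j)" by (simp add: Xm_def matrix_vector_mult_def)
      also have "\<dots> = (\<Sum>j\<in>UNIV. \<Sum>k<m. form Km (ob k) (axis j 1) * (ob k)$i * b$j)"
        by (simp add: X_def sum_component sum_distrib_right)
      also have "\<dots> = (\<Sum>k<m. \<Sum>j\<in>UNIV. form Km (ob k) (axis j 1) * (ob k)$i * b$j)" by (rule sum.swap)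
      also have "\<dots> = (X b)$i" by (simp add: X_def sum_component lin sum_distrib_right sum_distrib_left mult_ac)
      finally show "(Xm *v b)$i = (X b)$i" .
    qed
  qed
  have comm: "X (\<rho> g *v b) = \<rho> g *v X b" if g: "g \<in> G" for g b
  proof -
    have all: "form Gm a (X (\<rho> g *v b)) = form Gm a (\<rho> g *v X b)" for a
    proof -
      have "form Gm a (X (\<rho> g *v b)) = form Km a (\<rho> g *v b)" by (rule KX[symmetric])
      also have "\<dots> = form Km (\<rho> g *v (\<rho> (cadj g) *v a)) (\<rho> g *v b)" using rinv1[OF g] by simp
      also have "\<dots> = form Km (\<rho> (cadj g) *v a) b" by (rule inv[OF g])
      also have "\<dots> = form Gm (\<rho> (cadj g) *v a) (X b)" by (rule KX)
      also have "\<dots> = form Gm (\<rho> g *v (\<rho> (cadj g) *v a)) (\<rho> g *v X b)" by (rule B_inv[OF g, symmetric])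
      also have "\<dots> = form Gm a (\<rho> g *v X b)" using rinv1[OF g] by simp
      finally show ?thesis .
    qed
    define u where "u = X (\<rho> g *v b) - \<rho> g *v X b"
    have "form Gm u u = 0" unfolding u_def[symmetric] using all[of u] by (simp add: u_def form_diff_r)
    hence "u = 0" by (rule def)
    thus ?thesis unfolding u_def by simp
  qed
  obtain k v where v: "v \<noteq> 0" "Xm *v v = k *s v" using complex_eigen_exists[of Xm] by blast
  define W where "W = {w. Xm *v w = k *s w}"
  have sub: "csubspace_vec W"
    unfolding csubspace_vec_def W_def
    by (auto simp: matrix_vector_right_distrib vector_add_ldistrib mv_smult vector_smult_assoc mult.commute)
  have invW: "\<forall>g\<in>G. \<forall>w\<in>W. \<rho> g *v w \<in> W"
  proof (intro ballI)
    fix g w assume g: "g \<in> G" and w: "w \<in> W"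
    have "Xm *v (\<rho> g *v w) = \<rho> g *v (Xm *v w)" unfolding XmX using comm[OF g] .
    also have "\<dots> = k *s (\<rho> g *v w)" using w unfolding W_def by (simp add: mv_smult)
    finally show "\<rho> g *v w \<in> W" unfolding W_def by simp
  qed
  have "W = {0} \<or> W = UNIV" using irr sub invW unfolding irreducible_rep_def by blast
  moreover have "v \<in> W" using v unfolding W_def by simp
  ultimately have "W = UNIV" using v(1) by blast
  hence Xk: "X b = k *s b" for b unfolding W_def XmX[symmetric] by blast
  have "form Km a b = k * form Gm a b" for a b using KX[of a b] Xk[of b] by (simp add: form_smult_r)
  thus ?thesis by blast
qed

end




context code_setup
begin

lemma K_eq: "inner_n n (T a) (apply_op n E (T b)) = form (\<chi> i j. inner_n n (tau i) (apply_op n E (tau j))) a b"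
proof -
  have "inner_n n (T a) (apply_op n E (T b)) = inner_n n (\<lambda>xs. \<Sum>i\<in>UNIV. a$i * tau i xs)
      (apply_op n E (\<lambda>xs. \<Sum>i\<in>UNIV. b$i * tau i xs))"
    by (simp only: T_expand[of a] T_expand[of b])
  also have "\<dots> = inner_n n (\<lambda>xs. \<Sum>i\<in>UNIV. a$i * tau i xs) (\<lambda>xs. \<Sum>j\<in>UNIV. b$j * apply_op n E (tau j) xs)"
    by (simp only: apply_op_lin)
  also have "\<dots> = form (\<chi> i j. inner_n n (tau i) (apply_op n E (tau j))) a b" by (rule inner_lin)
  finally show ?thesis .
qed

lemma KL:
  assumes design: "twisted_unitary_t_group G \<rho> t" and wl: "weight_le n t E"
  shows "\<exists>c. \<forall>\<psi>\<in>C. \<forall>\<phi>\<in>C. inner_n n \<psi> (apply_op n E \<phi>) = c * inner_n n \<psi> \<phi>"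
proof -
  define w where "w g = complex_of_real ((cmod (character \<rho> g))\<^sup>2)" for g
  obtain \<mu> where haar: "haar_measure \<mu>" and D: "\<forall>a b. length a = t \<longrightarrow> length b = t \<longrightarrow>
          (1 / of_nat (card G)) * (\<Sum>g\<in>G. w g * moment_entry t g a b) = integral\<^sup>L \<mu> (\<lambda>U. moment_entry t U a b)"
    using design unfolding twisted_unitary_t_group_def w_def by blast
  interpret ds: design_setup \<mu> G w t
    using haar D cG GU Gmult by unfold_locales auto
  define Km where "Km = (\<chi> i j. inner_n n (tau i) (apply_op n E (tau j)))"
  have Keq: "inner_n n (T a) (apply_op n E (T b)) = form Km a b" for a b unfolding Km_def by (rule K_eq)
  have P: "(\<Sum>g\<in>G. w g * form Km (\<rho> g *v (\<rho> h *v a)) (\<rho> g *v (\<rho> h *v b)))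
         = (\<Sum>g\<in>G. w g * form Km (\<rho> g *v a) (\<rho> g *v b))" if h: "h \<in> G" for h a b
  proof -
    have "(\<Sum>g\<in>G. w g * form Km (\<rho> g *v (\<rho> h *v a)) (\<rho> g *v (\<rho> h *v b)))
       = (\<Sum>g\<in>G. w g * inner_n n (apply_op n (tensor_pow n (g ** h)) (T a)) (apply_op n E (apply_op n (tensor_pow n (g ** h)) (T b))))"
    proof (intro sum.cong refl)
      fix g assume g: "g \<in> G"
      have gh: "g ** h \<in> G" using Gmult g h by blast
      show "w g * form Km (\<rho> g *v (\<rho> h *v a)) (\<rho> g *v (\<rho> h *v b)) =
        w g * inner_n n (apply_op n (tensor_pow n (g ** h)) (T a)) (apply_op n E (apply_op n (tensor_pow n (g ** h)) (T b)))"
        unfolding Tint[OF gh] rmul[OF g h] Keq ..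
    qed
    also have "\<dots> = (\<Sum>g\<in>G. w g * inner_n n (apply_op n (tensor_pow n g) (T a)) (apply_op n E (apply_op n (tensor_pow n g) (T b))))"
      by (rule ds.twirl_invariant[OF h wl])
    also have "\<dots> = (\<Sum>g\<in>G. w g * form Km (\<rho> g *v a) (\<rho> g *v b))"
      by (intro sum.cong refl) (simp add: Tint Keq)
    finally show ?thesis .
  qed
  define SA where "SA a b = (\<Sum>h\<in>G. form Km (\<rho> h *v a) (\<rho> h *v b))" for a b
  define Am where "Am = (\<Sum>h\<in>G. cadj (\<rho> h) ** Km ** \<rho> h)"
  have Aeq: "form Am a b = SA a b" for a b
    unfolding Am_def SA_def by (simp add: form_sum_mat[OF finG] form_transform)
  have SAinv: "SA (\<rho> g *v a) (\<rho> g *v b) = SA a b" if g: "g \<in> G" for g a b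
  proof -
    have "SA (\<rho> g *v a) (\<rho> g *v b) = (\<Sum>h\<in>G. form Km (\<rho> (h ** g) *v a) (\<rho> (h ** g) *v b))"
      unfolding SA_def using g by (intro sum.cong refl) (simp add: rmul)
    also have "\<dots> = SA a b" unfolding SA_def by (rule sum_right_mult[OF g])
    finally show ?thesis .
  qed
  define Zm where "Zm = (\<chi> i j. of_nat (card G) * Km$i$j - Am$i$j)"
  have Zeq: "form Zm a b = of_nat (card G) * form Km a b - SA a b" for a b
    unfolding Zm_def form_lincomb Aeq ..
  have H: "(\<Sum>g\<in>G. w g * form Zm (\<rho> g *v a) (\<rho> g *v b)) = 0" for a b
  proof -
    have 1: "(\<Sum>g\<in>G. w g * SA (\<rho> g *v a) (\<rho> g *v b)) = (\<Sum>g\<in>G. w g * SA a b)"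
      by (intro sum.cong refl) (simp add: SAinv)
    have "of_nat (card G) * (\<Sum>g\<in>G. w g * form Km (\<rho> g *v a) (\<rho> g *v b))
        = (\<Sum>h\<in>G. \<Sum>g\<in>G. w g * form Km (\<rho> g *v (\<rho> h *v a)) (\<rho> g *v (\<rho> h *v b)))"
      using P by simp
    also have "\<dots> = (\<Sum>g\<in>G. w g * (\<Sum>h\<in>G. form Km (\<rho> (g ** h) *v a) (\<rho> (g ** h) *v b)))"
      by (subst sum.swap) (intro sum.cong refl, simp add: sum_distrib_left rmul)
    also have "\<dots> = (\<Sum>g\<in>G. w g * SA a b)"
      unfolding SA_def by (intro sum.cong refl) (simp add: sum_left_mult[where f="\<lambda>h. form Km (\<rho> h *v a) (\<rho> h *v b)"])
    finally have 2: "of_nat (card G) * (\<Sum>g\<in>G. w g * form Km (\<rho> g *v a) (\<rho> g *v b)) = (\<Sum>g\<in>G. w g * SA a b)" .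
    show ?thesis unfolding Zeq using 1 2
      by (simp add: right_diff_distrib sum_subtractf sum_distrib_left mult_ac)
  qed
  have Z0: "form Zm a b = 0" for a b
    by (rule form_zero) (use H in \<open>simp add: w_def\<close>)
  have Kinv: "form Km (\<rho> g *v a) (\<rho> g *v b) = form Km a b" if g: "g \<in> G" for g a b
  proof -
    have c0: "of_nat (card G) \<noteq> (0::complex)" using cG by simp
    have "of_nat (card G) * form Km (\<rho> g *v a) (\<rho> g *v b) = SA (\<rho> g *v a) (\<rho> g *v b)"
      using Z0 Zeq by (metis eq_iff_diff_eq_0)
    also have "\<dots> = SA a b" by (rule SAinv[OF g])
    also have "\<dots> = of_nat (card G) * form Km a b" using Z0 Zeq by (metis eq_iff_diff_eq_0)
    finally show ?thesis using c0 by simp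
  qed
  obtain c where c: "\<forall>a b. form Km a b = c * form Gm a b" using schur[OF Kinv] by blast
  have "\<forall>\<psi>\<in>C. \<forall>\<phi>\<in>C. inner_n n \<psi> (apply_op n E \<phi>) = c * inner_n n \<psi> \<phi>"
  proof (intro ballI)
    fix \<psi> \<phi> assume "\<psi> \<in> C" "\<phi> \<in> C"
    then obtain a b where "\<psi> = T a" "\<phi> = T b" using Tbij unfolding bij_betw_def by blast
    thus "inner_n n \<psi> (apply_op n E \<phi>) = c * inner_n n \<psi> \<phi>" using c by (simp add: Keq B_eq)
  qed
  thus ?thesis by blast
qed

end

theorem theorem1:
  fixes G :: "('q::finite) cmat set"
    and \<rho> :: "'q cmat \<Rightarrow> complex^'d::finite^'d"
    and t n :: nat
    and C :: "('q list \<Rightarrow> complex) set"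
  assumes "finite_unitary_subgroup G"
    and "irreducible_rep G \<rho>"
    and "twisted_unitary_t_group G \<rho> t"
    and "n \<ge> 1"
    and "transforms_in n G \<rho> C"
  shows "(\<forall>E. weight_le n t E \<longrightarrow>
            (\<exists>c. \<forall>\<psi>\<in>C. \<forall>\<phi>\<in>C. inner_n n \<psi> (apply_op n E \<phi>) = c * inner_n n \<psi> \<phi>))
       \<and> (\<forall>g\<in>G. \<forall>v\<in>C. apply_op n (tensor_pow n g) v \<in> C)
       \<and> (\<exists>T. intertwining_iso n G \<rho> C T)"
proof -
  have inv: "\<forall>g\<in>G. \<forall>v\<in>C. apply_op n (tensor_pow n g) v \<in> C" and sub: "C \<subseteq> tensor_space n"
    and ex: "\<exists>T. intertwining_iso n G \<rho> C T"
    using assms(5) unfolding transforms_in_def by auto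
  obtain T where T: "intertwining_iso n G \<rho> C T" using ex by blast
  interpret cs: code_setup G \<rho> n C T using assms(1,2) sub T by unfold_locales
  have "\<forall>E. weight_le n t E \<longrightarrow>
            (\<exists>c. \<forall>\<psi>\<in>C. \<forall>\<phi>\<in>C. inner_n n \<psi> (apply_op n E \<phi>) = c * inner_n n \<psi> \<phi>)"
    using cs.KL[OF assms(3)] by blast
  thus ?thesis using inv ex by blast
qed


end
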